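(* Let $\mathcal{M}_L$ be an SCM over $\mathbf{V}_L$, let $\tau:\mathcal{D}_{\mathbf{V}_L}\to\mathcal{D}_{\mathbf{V}_H}$ be a constructive abstraction function with respect to an admissible intervariable clustering $\mathbb{C}$ of $\mathbf{V}_L$ and an intravariable clustering $\mathbb{D}$, and let $\mathcal{M}_H$ be an SCM over $\mathbf{V}_H$. Then $\mathcal{M}_H$ is $\mathcal{L}_3$-$\tau$ consistent with $\mathcal{M}_L$ if and only if there exist SCMs $\mathcal{M}_L'$ over $\mathbf{V}_L$ and $\mathcal{M}_H'$ over $\mathbf{V}_H$ such that $\mathcal{L}_3(\mathcal{M}_L')=\mathcal{L}_3(\mathcal{M}_L)$, $\mathcal{L}_3(\mathcal{M}_H')=\mathcal{L}_3(\mathcal{M}_H)$, and $\mathcal{M}_H'$ is a constructive $\tau$-abstraction of $\mathcal{M}_L'$.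
   Context: An SCM $\mathcal{M}=\langle \mathbf{U},\mathbf{V},\mathcal{F},P(\mathbf{U})\rangle$ consists of exogenous variables $\mathbf{U}$, endogenous variables $\mathbf{V}$, functions $\mathcal{F}=\{f_V:V\in\mathbf{V}\}$ where $f_V$ maps values of exogenous parents $\mathbf{U}_V\subseteq\mathbf{U}$ and endogenous parents $\mathbf{Pa}_V\subseteq\mathbf{V}\setminus\{V\}$ to a value of $V$, and a distribution $P(\mathbf{U})$ on $\mathcal{D}_{\mathbf{U}}$ (for a set $\mathbf{X}$, $\mathcal{D}_{\mathbf{X}}$ is the Cartesian product of the domains). All SCMs are recursive (acyclic), and endogenous variables have finite discrete domains. For $\mathbf{X}\subseteq\mathbf{V}$, $\mathbf{Y}_{\mathbf{x}}(\mathbf{u})$ denotes the value of $\mathbf{Y}$ under $\mathbf{U}=\mathbf{u}$ in the submodel where each $f_X$, $X\in\mathbf{X}$, is replaced by the constant given by $\mathbf{x}$; $\mathcal{M}_{[\mathbf{X}\leftarrow\mathbf{x}]}(\mathbf{u})$ denotes the tuple of values of all endogenous variables in that submodel. Counterfactual probabilities are $P^{\mathcal{M}}(\mathbf{y}_{1[\mathbf{x}_1]},\mathbf{y}_{2[\mathbf{x}_2]},\dots)=\int \mathbf{1}[\mathbf{Y}_{1[\mathbf{x}_1]}(\mathbf{u})=\mathbf{y}_1,\mathbf{Y}_{2[\mathbf{x}_2]}(\mathbf{u})=\mathbf{y}_2,\dots]\,dP(\mathbf{u})$; $\mathcal{L}_3(\mathcal{M})$ is the set of all such distributions, $\mathcal{L}_2(\mathcal{M})$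 the subset with all $\mathbf{x}_i$ equal, $\mathcal{L}_1(\mathcal{M})$ the subset with all $\mathbf{X}_i=\emptyset$. Clusterings: an intervariable clustering of $\mathbf{V}_L$ is a set $\mathbb{C}=\{\mathbf{C}_1,\dots,\mathbf{C}_n\}$ that is a partition of a subset of $\mathbf{V}_L$; it is admissible w.r.t. an SCM if for every $\mathbf{C}_i$ and every $V\in\mathbf{C}_i$, no descendant of $V$ outside $\mathbf{C}_i$ is an ancestor of a variable in $\mathbf{C}_i$ (this is assumed throughout). An intravariable clustering w.r.t. $\mathbb{C}$ is $\mathbb{D}=\{\mathbb{D}_{\mathbf{C}_i}\}$, where $\mathbb{D}_{\mathbf{C}_i}=\{\mathcal{D}^1_{\mathbf{C}_i},\dots,\mathcal{D}^{m_i}_{\mathbf{C}_i}\}$ is a partition of $\mathcal{D}_{\mathbf{C}_i}$. A function $\tau:\mathcal{D}_{\mathbf{V}_L}\to\mathcal{D}_{\mathbf{V}_H}$ is a constructive abstraction function w.r.t. $\mathbb{C},\mathbb{D}$ if there is a bijection between $\mathbf{V}_H$ and $\mathbb{C}$ ($V_{H,i}\leftrightarrow\mathbf{C}_i$), for each $i$ a bijection between $\mathcal{D}_{V_{H,i}}$ and $\mathbb{D}_{\mathbf{C}_i}$ ($v^j_{H,i}\leftrightarrow\mathcal{D}^j_{\mathbf{C}_i}$), and $\tau(\mathbf{v}_L)=(\tau_{\mathbf{C}_i}(\mathbf{c}_i):\mathbf{C}_i\in\mathbb{C})$ with $\tau_{\mathbf{C}_i}(\mathbf{c}_i)=v^j_{H,i}$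 iff $\mathbf{c}_i\in\mathcal{D}^j_{\mathbf{C}_i}$. For $\mathbf{W}_L$ a union of clusters, $\tau(\mathbf{w}_L)=(\tau_{\mathbf{C}_i}(\mathbf{c}_i):\mathbf{C}_i\subseteq\mathbf{W}_L)$ and $\tau(\mathbf{W}_L)$ is the corresponding set of high-level variables. $Q$-$\tau$ consistency: let $\mathbf{Y}_{L,*}=(\mathbf{Y}_{L,1[\mathbf{x}_{L,1}]},\mathbf{Y}_{L,2[\mathbf{x}_{L,2}]},\dots)$ where every $\mathbf{Y}_{L,i}$ and $\mathbf{X}_{L,i}$ is a union of clusters of $\mathbb{C}$, and $\mathbf{Y}_{H,*}=(\tau(\mathbf{Y}_{L,1})_{[\tau(\mathbf{x}_{L,1})]},\dots)$. For $\mathbf{y}_{H,*}$, let $Q=\sum_{\mathbf{y}_{L,*}:\tau(\mathbf{y}_{L,*})=\mathbf{y}_{H,*}}P(\mathbf{Y}_{L,*}=\mathbf{y}_{L,*})$ and $\tau(Q)=P(\mathbf{Y}_{H,*}=\mathbf{y}_{H,*})$. $\mathcal{M}_H$ is $Q$-$\tau$ consistent with $\mathcal{M}_L$ if the value of $Q$ in $\mathcal{M}_L$ equals the value of $\tau(Q)$ in $\mathcal{M}_H$; it is $\mathcal{L}_i$-$\tau$ consistent if this holds for all such $Q$ whose underlying counterfactual distribution is in layer $\mathcal{L}_i$. Constructive $\tau$-abstraction: for a set of variables $\mathbf{V}$ and value $\mathbf{x}$ of $\mathbf{X}\subseteq\mathbf{V}$, $\mathrm{Rst}(\mathbf{V},\mathbf{x})=\{\mathbf{v}\in\mathcal{D}_{\mathbf{V}}:\mathbf{v}\text{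 consistent with }\mathbf{x}\}$; $\omega_\tau(\mathbf{X}_L\leftarrow\mathbf{x}_L)=(\mathbf{X}_H\leftarrow\mathbf{x}_H)$ where $\tau(\mathrm{Rst}(\mathbf{V}_L,\mathbf{x}_L))=\mathrm{Rst}(\mathbf{V}_H,\mathbf{x}_H)$. The allowed low-level interventions $\mathcal{I}_L$ are exactly the interventions $\mathbf{X}_L\leftarrow\mathbf{x}_L$ with $\mathbf{X}_L$ a union of clusters of $\mathbb{C}$; the allowed high-level interventions $\mathcal{I}_H$ are all interventions on $\mathbf{V}_H$. $\mathcal{M}_H=\langle\mathbf{U}_H,\mathbf{V}_H,\mathcal{F}_H,P(\mathbf{U}_H)\rangle$ is a $\tau$-abstraction of $\mathcal{M}_L=\langle\mathbf{U}_L,\mathbf{V}_L,\mathcal{F}_L,P(\mathbf{U}_L)\rangle$ if (1) $\tau$ is surjective; (2) there is a surjective $\tau_{\mathbf{U}}:\mathcal{D}_{\mathbf{U}_L}\to\mathcal{D}_{\mathbf{U}_H}$ with $P(\mathbf{U}_H)$ the push-forward of $P(\mathbf{U}_L)$ under $\tau_{\mathbf{U}}$ and $\tau(\mathcal{M}_{L[\mathbf{X}_L\leftarrow\mathbf{x}_L]}(\mathbf{u}_L))=\mathcal{M}_{H[\omega_\tau(\mathbf{X}_L\leftarrow\mathbf{x}_L)]}(\tau_{\mathbf{U}}(\mathbf{u}_L))$ for all $\mathbf{u}_L$ and all $(\mathbf{X}_L\leftarrow\mathbf{x}_L)\in\mathcal{I}_L$; (3) $\mathcal{I}_H=\omega_\tau(\mathcal{I}_L)$.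 It is a strong $\tau$-abstraction if moreover $\mathcal{I}_H$ is the set of all interventions on $\mathbf{V}_H$, and a constructive $\tau$-abstraction if it is a strong $\tau$-abstraction and there is a partition $\{\mathbf{C}_1,\dots,\mathbf{C}_{n+1}\}$ of $\mathbf{V}_L$ ($n=|\mathbf{V}_H|$, $\mathbf{C}_1,\dots,\mathbf{C}_n$ nonempty) such that $\tau=(\tau_{\mathbf{C}_1},\dots,\tau_{\mathbf{C}_n})$ with $\tau_{\mathbf{C}_i}:\mathcal{D}_{\mathbf{C}_i}\to\mathcal{D}_{V_{H,i}}$. *)

theory Defs
  imports "HOL-Probability.Probability"
begin

text \<open>The exogenous
  state is a point u of an abstract measurable space (the tuple of all exogenous
  variables); f_W may depend on u (exogenous parents) and on the endogenous
  parents Pa W only.\<close>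

record ('v, 'a, 'u) scm =
  scm_pa :: "'v \<Rightarrow> 'v set"
  scm_f  :: "'v \<Rightarrow> 'u \<Rightarrow> ('v \<Rightarrow> 'a) \<Rightarrow> 'a"
  scm_P  :: "'u measure"

definition scm_edges :: "'v set \<Rightarrow> ('v, 'a, 'u) scm \<Rightarrow> ('v \<times> 'v) set" where
  "scm_edges V M = {(X, W). W \<in> V \<and> X \<in> scm_pa M W}"

definition is_scm :: "'v set \<Rightarrow> ('v \<Rightarrow> 'a set) \<Rightarrow> ('v, 'a, 'u) scm \<Rightarrow> bool" where
  "is_scm V D M \<longleftrightarrow>
     finite V \<and> (\<forall>W\<in>V. finite (D W) \<and> D W \<noteq> {}) \<and>
     (\<forall>W\<in>V. scm_pa M W \<subseteq> V - {W}) \<and>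
     acyclic (scm_edges V M) \<and>
     prob_space (scm_P M) \<and>
     (\<forall>W\<in>V. \<forall>u\<in>space (scm_P M). \<forall>v\<in>PiE V D. scm_f M W u v \<in> D W) \<and>
     (\<forall>W\<in>V. \<forall>u v v'. (\<forall>Z\<in>scm_pa M W. v Z = v' Z) \<longrightarrow> scm_f M W u v = scm_f M W u v') \<and>
     (\<forall>W\<in>V. \<forall>v\<in>PiE V D. (\<lambda>u. scm_f M W u v) \<in> measurable (scm_P M) (count_space UNIV))"

definition solve :: "'v set \<Rightarrow> ('v \<Rightarrow> 'a set) \<Rightarrow> ('v, 'a, 'u) scm \<Rightarrow> 'v set \<Rightarrow> ('v \<Rightarrow> 'a) \<Rightarrow> 'u \<Rightarrow> ('v \<Rightarrow> 'a)" where
  "solve V D M X x u =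
     (THE v. v \<in> PiE V D \<and> (\<forall>W\<in>V. v W = (if W \<in> X then x W else scm_f M W u v)))"

text \<open>Counterfactual probability P(y1_[x1], y2_[x2], ...); a term is (Y, X, x, y).\<close>
definition cf_prob :: "'v set \<Rightarrow> ('v \<Rightarrow> 'a set) \<Rightarrow> ('v, 'a, 'u) scm \<Rightarrow>
    ('v set \<times> 'v set \<times> ('v \<Rightarrow> 'a) \<times> ('v \<Rightarrow> 'a)) list \<Rightarrow> real" where
  "cf_prob V D M ts = measure (scm_P M)
     {u \<in> space (scm_P M). \<forall>(Y, X, x, y) \<in> set ts. restrict (solve V D M X x u) Y = y}"

definition valid_cf :: "'v set \<Rightarrow> ('v \<Rightarrow> 'a set) \<Rightarrow>
    ('v set \<times> 'v set \<times> ('v \<Rightarrow> 'a) \<times> ('v \<Rightarrow> 'a)) list \<Rightarrow> bool" where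
  "valid_cf V D ts \<longleftrightarrow> (\<forall>(Y, X, x, y) \<in> set ts. Y \<subseteq> V \<and> X \<subseteq> V \<and> x \<in> PiE X D \<and> y \<in> PiE Y D)"

definition L3_equal :: "'v set \<Rightarrow> ('v \<Rightarrow> 'a set) \<Rightarrow> ('v, 'a, 'u) scm \<Rightarrow> ('v, 'a, 'u2) scm \<Rightarrow> bool" where
  "L3_equal V D M M' \<longleftrightarrow> (\<forall>ts. valid_cf V D ts \<longrightarrow> cf_prob V D M ts = cf_prob V D M' ts)"

text \<open>The intervariable clustering is given via the bijection h |-> cl h from V_H
  onto the clusters; the intravariable clustering via the bijection a |-> blk h a
  from the domain of h onto the blocks of the partition of D_(cl h).\<close>

definition inter_clustering :: "'vl set \<Rightarrow> 'vh set \<Rightarrow> ('vh \<Rightarrow> 'vl set) \<Rightarrow> bool" where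
  "inter_clustering VL VH cl \<longleftrightarrow>
     finite VH \<and> (\<forall>h\<in>VH. cl h \<noteq> {} \<and> cl h \<subseteq> VL) \<and>
     (\<forall>h\<in>VH. \<forall>h'\<in>VH. h \<noteq> h' \<longrightarrow> cl h \<inter> cl h' = {})"

definition admissible :: "'vl set \<Rightarrow> ('vl, 'al, 'u) scm \<Rightarrow> 'vh set \<Rightarrow> ('vh \<Rightarrow> 'vl set) \<Rightarrow> bool" where
  "admissible VL M VH cl \<longleftrightarrow>
     (\<forall>h\<in>VH. \<forall>V\<in>cl h. \<forall>W. W \<notin> cl h \<and> (V, W) \<in> (scm_edges VL M)\<^sup>+ \<longrightarrow>
        \<not> (\<exists>Z\<in>cl h. (W, Z) \<in> (scm_edges VL M)\<^sup>+))"

definition intra_clustering :: "'vl set \<Rightarrow> ('vl \<Rightarrow> 'al set) \<Rightarrow> 'vh set \<Rightarrow> ('vh \<Rightarrow> 'ah set) \<Rightarrow>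
    ('vh \<Rightarrow> 'vl set) \<Rightarrow> ('vh \<Rightarrow> 'ah \<Rightarrow> ('vl \<Rightarrow> 'al) set) \<Rightarrow> bool" where
  "intra_clustering VL DL VH DH cl blk \<longleftrightarrow>
     (\<forall>h\<in>VH.
        (\<forall>a\<in>DH h. blk h a \<noteq> {} \<and> blk h a \<subseteq> PiE (cl h) DL) \<and>
        (\<forall>a\<in>DH h. \<forall>a'\<in>DH h. a \<noteq> a' \<longrightarrow> blk h a \<inter> blk h a' = {}) \<and>
        (\<Union>a\<in>DH h. blk h a) = PiE (cl h) DL)"

definition cval :: "('vh \<Rightarrow> 'vl set) \<Rightarrow> ('vh \<Rightarrow> 'ah \<Rightarrow> ('vl \<Rightarrow> 'al) set) \<Rightarrow> ('vh \<Rightarrow> 'ah set) \<Rightarrow>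
    'vh \<Rightarrow> ('vl \<Rightarrow> 'al) \<Rightarrow> 'ah" where
  "cval cl blk DH h c = (THE a. a \<in> DH h \<and> restrict c (cl h) \<in> blk h a)"

definition tauset :: "'vh set \<Rightarrow> ('vh \<Rightarrow> 'vl set) \<Rightarrow> 'vl set \<Rightarrow> 'vh set" where
  "tauset VH cl W = {h \<in> VH. cl h \<subseteq> W}"

definition tauv :: "'vh set \<Rightarrow> ('vh \<Rightarrow> 'vl set) \<Rightarrow> ('vh \<Rightarrow> 'ah \<Rightarrow> ('vl \<Rightarrow> 'al) set) \<Rightarrow>
    ('vh \<Rightarrow> 'ah set) \<Rightarrow> 'vl set \<Rightarrow> ('vl \<Rightarrow> 'al) \<Rightarrow> ('vh \<Rightarrow> 'ah)" where
  "tauv VH cl blk DH W w = (\<lambda>h\<in>tauset VH cl W. cval cl blk DH h w)"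

definition cunion :: "'vh set \<Rightarrow> ('vh \<Rightarrow> 'vl set) \<Rightarrow> 'vl set \<Rightarrow> bool" where
  "cunion VH cl W \<longleftrightarrow> (\<exists>S\<subseteq>VH. W = \<Union>(cl ` S))"

definition L3_tau_consistent :: "'vl set \<Rightarrow> ('vl \<Rightarrow> 'al set) \<Rightarrow> ('vl, 'al, 'ul) scm \<Rightarrow>
    'vh set \<Rightarrow> ('vh \<Rightarrow> 'ah set) \<Rightarrow> ('vh, 'ah, 'uh) scm \<Rightarrow>
    ('vh \<Rightarrow> 'vl set) \<Rightarrow> ('vh \<Rightarrow> 'ah \<Rightarrow> ('vl \<Rightarrow> 'al) set) \<Rightarrow> bool" where
  "L3_tau_consistent VL DL Ml VH DH Mh cl blk \<longleftrightarrow>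
     (\<forall>(ts :: ('vl set \<times> 'vl set \<times> ('vl \<Rightarrow> 'al)) list) (yHs :: ('vh \<Rightarrow> 'ah) list).
        length yHs = length ts \<and>
        (\<forall>(Y, X, x) \<in> set ts. cunion VH cl Y \<and> cunion VH cl X \<and> x \<in> PiE X DL) \<and>
        (\<forall>i<length ts. yHs ! i \<in> PiE (tauset VH cl (fst (ts ! i))) DH)
      \<longrightarrow>
        (\<Sum>ys \<in> {ys. length ys = length ts \<and>
                     (\<forall>i<length ts. ys ! i \<in> PiE (fst (ts ! i)) DL \<and>
                        tauv VH cl blk DH (fst (ts ! i)) (ys ! i) = yHs ! i)}.
           cf_prob VL DL Ml (map2 (\<lambda>(Y, X, x) y. (Y, X, x, y)) ts ys))
        = cf_prob VH DH Mh
            (map2 (\<lambda>(Y, X, x) yH. (tauset VH cl Y, tauset VH cl X, tauv VH cl blk DH X x, yH)) ts yHs))"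

definition Rst :: "'v set \<Rightarrow> ('v \<Rightarrow> 'a set) \<Rightarrow> 'v set \<Rightarrow> ('v \<Rightarrow> 'a) \<Rightarrow> ('v \<Rightarrow> 'a) set" where
  "Rst V D X x = {v \<in> PiE V D. \<forall>W\<in>X. v W = x W}"

definition omega_rel :: "'vl set \<Rightarrow> ('vl \<Rightarrow> 'al set) \<Rightarrow> 'vh set \<Rightarrow> ('vh \<Rightarrow> 'ah set) \<Rightarrow>
    ('vh \<Rightarrow> 'vl set) \<Rightarrow> ('vh \<Rightarrow> 'ah \<Rightarrow> ('vl \<Rightarrow> 'al) set) \<Rightarrow>
    'vl set \<Rightarrow> ('vl \<Rightarrow> 'al) \<Rightarrow> 'vh set \<Rightarrow> ('vh \<Rightarrow> 'ah) \<Rightarrow> bool" where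
  "omega_rel VL DL VH DH cl blk XL xL XH xH \<longleftrightarrow>
     XH \<subseteq> VH \<and> xH \<in> PiE XH DH \<and>
     tauv VH cl blk DH VL ` Rst VL DL XL xL = Rst VH DH XH xH"

definition constructive_tau_abstraction :: "'vl set \<Rightarrow> ('vl \<Rightarrow> 'al set) \<Rightarrow> ('vl, 'al, 'ul) scm \<Rightarrow>
    'vh set \<Rightarrow> ('vh \<Rightarrow> 'ah set) \<Rightarrow> ('vh, 'ah, 'uh) scm \<Rightarrow>
    ('vh \<Rightarrow> 'vl set) \<Rightarrow> ('vh \<Rightarrow> 'ah \<Rightarrow> ('vl \<Rightarrow> 'al) set) \<Rightarrow> bool" where
  "constructive_tau_abstraction VL DL Ml VH DH Mh cl blk \<longleftrightarrow>
     \<comment> \<open>(1) tau surjective\<close>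
     tauv VH cl blk DH VL ` PiE VL DL = PiE VH DH \<and>
     \<comment> \<open>(2) exogenous map and commutation for all allowed low-level interventions\<close>
     (\<exists>tauU. tauU \<in> measurable (scm_P Ml) (scm_P Mh) \<and>
        tauU ` space (scm_P Ml) = space (scm_P Mh) \<and>
        scm_P Mh = distr (scm_P Ml) (scm_P Mh) tauU \<and>
        (\<forall>u\<in>space (scm_P Ml). \<forall>XL xL XH xH.
           cunion VH cl XL \<and> xL \<in> PiE XL DL \<and> omega_rel VL DL VH DH cl blk XL xL XH xH \<longrightarrow>
           tauv VH cl blk DH VL (solve VL DL Ml XL xL u) = solve VH DH Mh XH xH (tauU u))) \<and>
     \<comment> \<open>(3) + strong: omega_tau(I_L) is the set of all interventions on V_H\<close>
     (\<forall>XL xL. cunion VH cl XL \<and> xL \<in> PiE XL DL \<longrightarrow>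
        (\<exists>XH xH. omega_rel VL DL VH DH cl blk XL xL XH xH)) \<and>
     (\<forall>XH xH. XH \<subseteq> VH \<and> xH \<in> PiE XH DH \<longrightarrow>
        (\<exists>XL xL. cunion VH cl XL \<and> xL \<in> PiE XL DL \<and> omega_rel VL DL VH DH cl blk XL xL XH xH)) \<and>
     \<comment> \<open>constructive: tau splits along a partition of V_L (cells C h, plus the rest)\<close>
     (\<exists>(C :: 'vh \<Rightarrow> 'vl set) (g :: 'vh \<Rightarrow> ('vl \<Rightarrow> 'al) \<Rightarrow> 'ah).
        (\<forall>h\<in>VH. C h \<noteq> {} \<and> C h \<subseteq> VL) \<and>
        (\<forall>h\<in>VH. \<forall>h'\<in>VH. h \<noteq> h' \<longrightarrow> C h \<inter> C h' = {}) \<and>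
        (\<forall>h\<in>VH. \<forall>c\<in>PiE (C h) DL. g h c \<in> DH h) \<and>
        (\<forall>vL\<in>PiE VL DL. \<forall>h\<in>VH. tauv VH cl blk DH VL vL h = g h (restrict vL (C h))))"

end

theory Submission
  imports Defs
begin


lemma is_scmD:
  assumes "is_scm V D M"
  shows "finite V" "\<And>W. W\<in>V \<Longrightarrow> finite (D W)" "\<And>W. W\<in>V \<Longrightarrow> D W \<noteq> {}"
    "\<And>W. W\<in>V \<Longrightarrow> scm_pa M W \<subseteq> V - {W}" "acyclic (scm_edges V M)" "prob_space (scm_P M)"
    "\<And>W u v. W\<in>V \<Longrightarrow> u\<in>space (scm_P M) \<Longrightarrow> v\<in>PiE V D \<Longrightarrow> scm_f M W u v \<in> D W"
    "\<And>W u v v'. W\<in>V \<Longrightarrow> (\<forall>Z\<in>scm_pa M W. v Z = v' Z) \<Longrightarrow> scm_f M W u v = scm_f M W u v'"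
    "\<And>W v. W\<in>V \<Longrightarrow> v\<in>PiE V D \<Longrightarrow> (\<lambda>u. scm_f M W u v) \<in> measurable (scm_P M) (count_space UNIV)"
  using assms unfolding is_scm_def by blast+

lemma solve_props:
  assumes M: "is_scm V D M" and u: "u \<in> space (scm_P M)" and x: "\<forall>W\<in>X. x W \<in> D W"
  shows "solve V D M X x u \<in> PiE V D \<and>
    (\<forall>W\<in>V. solve V D M X x u W = (if W\<in>X then x W else scm_f M W u (solve V D M X x u)))"
proof -
  let ?r = "scm_edges V M"
  have rsub: "?r \<subseteq> V \<times> V" using is_scmD(4)[OF M] by (auto simp: scm_edges_def)
  have fin: "finite ?r" by (rule finite_subset[OF rsub]) (simp add: is_scmD(1)[OF M])
  have wf: "wf ?r" by (rule finite_acyclic_wf[OF fin is_scmD(5)[OF M]])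
  define P where "P v \<longleftrightarrow> v \<in> PiE V D \<and> (\<forall>W\<in>V. v W = (if W \<in> X then x W else scm_f M W u v))" for v
  have uniq: "v1 = v2" if "P v1" "P v2" for v1 v2
  proof -
    have "\<forall>W. W \<in> V \<longrightarrow> v1 W = v2 W" 
    proof
      fix W show "W \<in> V \<longrightarrow> v1 W = v2 W"
      proof (induction W rule: wf_induct[OF wf])
        case (1 W)
        show ?case
        proof
          assume W: "W \<in> V"
          have loc: "\<forall>Z\<in>scm_pa M W. v1 Z = v2 Z"
          proof
            fix Z assume Z: "Z \<in> scm_pa M W"
            hence "(Z, W) \<in> ?r" using W by (auto simp: scm_edges_def)
            moreover have "Z \<in> V" using Z is_scmD(4)[OF M W] by auto
            ultimately show "v1 Z = v2 Z" using 1 by blast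
          qed
          show "v1 W = v2 W"
            using that W is_scmD(8)[OF M W loc, of u] unfolding P_def by auto
        qed
      qed
    qed
    moreover have "v1 \<in> PiE V D" "v2 \<in> PiE V D" using that by (auto simp: P_def)
    ultimately show ?thesis by (metis PiE_ext)
  qed
  define clamp where "clamp g = (\<lambda>Z. if Z \<in> V then (if g Z \<in> D Z then g Z else (SOME d. d \<in> D Z)) else undefined)" for g :: "'a \<Rightarrow> 'b"
  have clampPi: "clamp g \<in> PiE V D" for g
    using is_scmD(3)[OF M] by (auto simp: clamp_def PiE_def extensional_def some_in_eq)
  define H where "H g W = (if W \<in> X then x W else scm_f M W u (clamp g))" for g W
  define sol where "sol = wfrec ?r H"
  have solD: "sol W \<in> D W" if "W \<in> V" for W
    using wfrec[OF wf, of H W] that x is_scmD(7)[OF M that u clampPi]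
    unfolding sol_def H_def by auto
  define v where "v = clamp sol"
  have vW: "v W = sol W" if "W \<in> V" for W using solD[OF that] that by (simp add: v_def clamp_def)
  have "P v"
    unfolding P_def
  proof (intro conjI ballI)
    show "v \<in> PiE V D" unfolding v_def by (rule clampPi)
    fix W assume W: "W \<in> V"
    have "sol W = H (cut sol ?r W) W" unfolding sol_def by (rule wfrec[OF wf])
    moreover have "scm_f M W u (clamp (cut sol ?r W)) = scm_f M W u v"
    proof (rule is_scmD(8)[OF M W], intro ballI)
      fix Z assume Z: "Z \<in> scm_pa M W"
      hence "(Z, W) \<in> ?r" using W by (auto simp: scm_edges_def)
      thus "clamp (cut sol ?r W) Z = v Z" by (simp add: v_def clamp_def cut_apply)
    qed
    ultimately show "v W = (if W \<in> X then x W else scm_f M W u v)"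
      using vW[OF W] by (simp add: H_def)
  qed
  have "solve V D M X x u = v"
  proof -
    have "(THE v. P v) = v" using \<open>P v\<close> uniq by (intro the_equality) blast+
    thus ?thesis unfolding solve_def P_def by simp
  qed
  thus ?thesis using \<open>P v\<close> by (simp add: P_def)
qed

definition Fv :: "'v set \<Rightarrow> ('v \<Rightarrow> 'a set) \<Rightarrow> ('v, 'a, 'u) scm \<Rightarrow> 'u \<Rightarrow> 'v \<Rightarrow> ('v \<Rightarrow> 'a) \<Rightarrow> 'a" where
  "Fv V D M u = (\<lambda>W\<in>V. \<lambda>v\<in>PiE V D. scm_f M W u v)"

definition resp :: "'v set \<Rightarrow> ('v \<Rightarrow> 'a set) \<Rightarrow> ('v, 'a, 'u) scm \<Rightarrow> ('u \<Rightarrow> 'b) \<Rightarrow> bool" where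
  "resp V D M g \<longleftrightarrow> (\<forall>u1\<in>space (scm_P M). \<forall>u2\<in>space (scm_P M). Fv V D M u1 = Fv V D M u2 \<longrightarrow> g u1 = g u2)"

lemma Fv_apply: "W \<in> V \<Longrightarrow> v \<in> PiE V D \<Longrightarrow> Fv V D M u W v = scm_f M W u v"
  by (simp add: Fv_def)

lemma Fv_eq_iff: "Fv V D M u1 = Fv V D M u2 \<longleftrightarrow> (\<forall>W\<in>V. \<forall>v\<in>PiE V D. scm_f M W u1 v = scm_f M W u2 v)"
proof
  assume e: "Fv V D M u1 = Fv V D M u2"
  show "\<forall>W\<in>V. \<forall>v\<in>PiE V D. scm_f M W u1 v = scm_f M W u2 v"
  proof (intro ballI)
    fix W v assume "W \<in> V" "v \<in> PiE V D"
    thus "scm_f M W u1 v = scm_f M W u2 v"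
      using Fv_apply[of W V v D M u1] Fv_apply[of W V v D M u2] e by simp
  qed
next
  assume "\<forall>W\<in>V. \<forall>v\<in>PiE V D. scm_f M W u1 v = scm_f M W u2 v"
  hence h: "\<And>W v. W \<in> V \<Longrightarrow> v \<in> PiE V D \<Longrightarrow> scm_f M W u1 v = scm_f M W u2 v" by blast
  show "Fv V D M u1 = Fv V D M u2"
  proof (intro ext)
    fix W v show "Fv V D M u1 W v = Fv V D M u2 W v"
    proof (cases "W \<in> V \<and> v \<in> PiE V D")
      case True thus ?thesis using h Fv_apply by metis
    next
      case False thus ?thesis unfolding Fv_def by auto
    qed
  qed
qed

lemma solve_PiE:
  assumes M: "is_scm V D M" and u: "u \<in> space (scm_P M)" and x: "x \<in> PiE X D"
  shows "solve V D M X x u \<in> PiE V D"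
proof -
  have "\<forall>W\<in>X. x W \<in> D W" using x by (auto simp: PiE_def Pi_def)
  thus ?thesis using solve_props[OF M u] by blast
qed

lemma solve_Fv:
  assumes "Fv V D M u1 = Fv V D M u2"
  shows "solve V D M X x u1 = solve V D M X x u2"
proof -
  have e: "scm_f M W u1 v = scm_f M W u2 v" if "W \<in> V" "v \<in> PiE V D" for W v
    using assms that unfolding Fv_eq_iff by blast
  have "(\<lambda>v. v \<in> PiE V D \<and> (\<forall>W\<in>V. v W = (if W \<in> X then x W else scm_f M W u1 v))) =
        (\<lambda>v. v \<in> PiE V D \<and> (\<forall>W\<in>V. v W = (if W \<in> X then x W else scm_f M W u2 v)))"
    using e by (intro ext) auto
  thus ?thesis unfolding solve_def by simp
qed

lemma Fv_finite:
  assumes M: "is_scm V D M"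
  shows "finite (Fv V D M ` space (scm_P M))"
proof -
  have fPi: "finite (PiE V D)" using is_scmD(1,2)[OF M] by (intro finite_PiE) auto
  have "Fv V D M ` space (scm_P M) \<subseteq> PiE V (\<lambda>W. PiE (PiE V D) (\<lambda>_. D W))"
  proof (rule image_subsetI)
    fix u assume u: "u \<in> space (scm_P M)"
    show "Fv V D M u \<in> PiE V (\<lambda>W. PiE (PiE V D) (\<lambda>_. D W))"
      unfolding Fv_def by (simp add: restrict_PiE_iff is_scmD(7)[OF M _ u])
  qed
  moreover have "finite (PiE V (\<lambda>W. PiE (PiE V D) (\<lambda>_. D W)))"
    using is_scmD(1,2)[OF M] fPi by (intro finite_PiE) auto
  ultimately show ?thesis by (rule finite_subset)
qed

lemma class_sets:
  assumes M: "is_scm V D M"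
  shows "{u \<in> space (scm_P M). Fv V D M u = \<phi>} \<in> sets (scm_P M)"
proof (cases "\<exists>u0\<in>space (scm_P M). Fv V D M u0 = \<phi>")
  case True
  then obtain u0 where u0: "u0 \<in> space (scm_P M)" "Fv V D M u0 = \<phi>" by blast
  have fPi: "finite (PiE V D)" using is_scmD(1,2)[OF M] by (intro finite_PiE) auto
  have eq: "{u \<in> space (scm_P M). Fv V D M u = \<phi>} =
    {u \<in> space (scm_P M). \<forall>W\<in>V. \<forall>v\<in>PiE V D. scm_f M W u v = scm_f M W u0 v}"
    by (simp only: u0(2)[symmetric] Fv_eq_iff)
  have base: "{u \<in> space (scm_P M). scm_f M W u v = c} \<in> sets (scm_P M)"
    if "W \<in> V" "v \<in> PiE V D" for W v c
  proof -
    have "(\<lambda>u. scm_f M W u v) -` {c} \<inter> space (scm_P M) \<in> sets (scm_P M)"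
      by (rule measurable_sets[OF is_scmD(9)[OF M that]]) simp
    moreover have "(\<lambda>u. scm_f M W u v) -` {c} \<inter> space (scm_P M) = {u \<in> space (scm_P M). scm_f M W u v = c}"
      by auto
    ultimately show ?thesis by simp
  qed
  show ?thesis unfolding eq
  proof (rule sets.sets_Collect_finite_All)
    fix W assume W: "W \<in> V"
    show "{u \<in> space (scm_P M). \<forall>v\<in>PiE V D. scm_f M W u v = scm_f M W u0 v} \<in> sets (scm_P M)"
      by (rule sets.sets_Collect_finite_All[OF base[OF W] fPi])
  qed (rule is_scmD(1)[OF M])
next
  case False
  hence e: "{u \<in> space (scm_P M). Fv V D M u = \<phi>} = {}" by auto
  show ?thesis unfolding e by simp
qed

lemma resp_pred_sets:
  assumes M: "is_scm V D M"
    and r: "\<And>u1 u2. u1 \<in> space (scm_P M) \<Longrightarrow> u2 \<in> space (scm_P M) \<Longrightarrow> Fv V D M u1 = Fv V D M u2 \<Longrightarrow> P u1 \<Longrightarrow> P u2"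
  shows "{u \<in> space (scm_P M). P u} \<in> sets (scm_P M)"
proof -
  have eq: "{u \<in> space (scm_P M). P u} = (\<Union>\<phi>\<in>Fv V D M ` {u \<in> space (scm_P M). P u}. {u \<in> space (scm_P M). Fv V D M u = \<phi>})"
    (is "_ = ?R")
  proof
    show "{u \<in> space (scm_P M). P u} \<subseteq> ?R" by blast
    show "?R \<subseteq> {u \<in> space (scm_P M). P u}"
    proof
      fix u assume "u \<in> ?R"
      then obtain u0 where "u0 \<in> space (scm_P M)" "P u0" "u \<in> space (scm_P M)" "Fv V D M u = Fv V D M u0" by auto
      thus "u \<in> {u \<in> space (scm_P M). P u}" using r[of u0 u] by auto
    qed
  qed
  have fin: "finite (Fv V D M ` {u \<in> space (scm_P M). P u})"
    by (rule finite_subset[OF image_mono Fv_finite[OF M]]) blast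
  show ?thesis by (subst eq) (intro sets.finite_UN fin ballI class_sets[OF M])
qed

lemma resp_sets:
  assumes M: "is_scm V D M" and g: "resp V D M g"
  shows "{u \<in> space (scm_P M). Q (g u)} \<in> sets (scm_P M)"
proof (rule resp_pred_sets[OF M])
  fix u1 u2 assume "u1 \<in> space (scm_P M)" "u2 \<in> space (scm_P M)" "Fv V D M u1 = Fv V D M u2" "Q (g u1)"
  moreover have "g u1 = g u2" using g calculation(1-3) unfolding resp_def by blast
  ultimately show "Q (g u2)" by simp
qed

lemma resp_finite:
  assumes M: "is_scm V D M" and g: "resp V D M g"
  shows "finite (g ` space (scm_P M))"
proof -
  define rep where "rep \<phi> = (SOME u. u \<in> space (scm_P M) \<and> Fv V D M u = \<phi>)" for \<phi>
  have rep: "rep (Fv V D M u) \<in> space (scm_P M) \<and> Fv V D M (rep (Fv V D M u)) = Fv V D M u"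
    if "u \<in> space (scm_P M)" for u
    unfolding rep_def by (rule someI[of _ u]) (simp add: that)
  have "g ` space (scm_P M) \<subseteq> (g \<circ> rep) ` (Fv V D M ` space (scm_P M))"
  proof
    fix y assume "y \<in> g ` space (scm_P M)"
    then obtain u where u: "u \<in> space (scm_P M)" "y = g u" by blast
    have gr: "\<And>u1 u2. u1 \<in> space (scm_P M) \<Longrightarrow> u2 \<in> space (scm_P M) \<Longrightarrow> Fv V D M u1 = Fv V D M u2 \<Longrightarrow> g u1 = g u2"
      using g unfolding resp_def by blast
    have "g u = g (rep (Fv V D M u))" by (rule gr) (use rep[OF u(1)] u(1) in auto)
    thus "y \<in> (g \<circ> rep) ` (Fv V D M ` space (scm_P M))" using u by auto
  qed
  thus ?thesis by (rule finite_subset) (intro finite_imageI Fv_finite[OF M])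
qed

lemma fiber_sum:
  assumes M: "is_scm V D M" and g: "resp V D M g" and A: "finite A" "g ` space (scm_P M) \<subseteq> A"
  shows "measure (scm_P M) {u \<in> space (scm_P M). Q (g u)} =
    (\<Sum>r\<in>{r\<in>A. Q r}. measure (scm_P M) {u \<in> space (scm_P M). g u = r})"
proof -
  interpret prob_space "scm_P M" by (rule is_scmD(6)[OF M])
  have eq: "{u \<in> space (scm_P M). Q (g u)} = (\<Union>r\<in>{r\<in>A. Q r}. {u \<in> space (scm_P M). g u = r})"
    using A(2) by auto
  show ?thesis unfolding eq
  proof (rule Measure_Space.measure_finite_Union[where S="{r\<in>A. Q r}" and A="\<lambda>r. {u \<in> space (scm_P M). g u = r}"])
    show "finite {r\<in>A. Q r}" by (rule finite_subset[OF _ A(1)]) blast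
    show "(\<lambda>r. {u \<in> space (scm_P M). g u = r}) ` {r\<in>A. Q r} \<subseteq> sets (scm_P M)"
      using resp_sets[OF M g, where Q="\<lambda>x. x = r" for r] by blast
    show "disjoint_family_on (\<lambda>r. {u \<in> space (scm_P M). g u = r}) {r\<in>A. Q r}"
      by (auto simp: disjoint_family_on_def)
    show "emeasure (scm_P M) {u \<in> space (scm_P M). g u = r} \<noteq> \<infinity>" for r
      using emeasure_finite by (simp add: top_unique)
  qed
qed


lemma cval_cong: "restrict c (cl h) = restrict c' (cl h) \<Longrightarrow> cval cl blk DH h c = cval cl blk DH h c'"
  unfolding cval_def by simp

context
  fixes VL :: "'vl set" and DL :: "'vl \<Rightarrow> 'al set" and VH :: "'vh set" and DH :: "'vh \<Rightarrow> 'ah set"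
    and cl :: "'vh \<Rightarrow> 'vl set" and blk :: "'vh \<Rightarrow> 'ah \<Rightarrow> ('vl \<Rightarrow> 'al) set"
  assumes IC: "inter_clustering VL VH cl" and IN: "intra_clustering VL DL VH DH cl blk"
begin

lemma cl_sub: "h \<in> VH \<Longrightarrow> cl h \<subseteq> VL" using IC by (auto simp: inter_clustering_def)
lemma cl_ne: "h \<in> VH \<Longrightarrow> cl h \<noteq> {}" using IC by (auto simp: inter_clustering_def)
lemma cl_disj: "h \<in> VH \<Longrightarrow> h' \<in> VH \<Longrightarrow> w \<in> cl h \<Longrightarrow> w \<in> cl h' \<Longrightarrow> h = h'"
  using IC unfolding inter_clustering_def by blast
lemma VH_fin: "finite VH" using IC by (auto simp: inter_clustering_def)

lemma IN_h: "h \<in> VH \<Longrightarrow> (\<forall>a\<in>DH h. blk h a \<noteq> {} \<and> blk h a \<subseteq> PiE (cl h) DL) \<and>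
        (\<forall>a\<in>DH h. \<forall>a'\<in>DH h. a \<noteq> a' \<longrightarrow> blk h a \<inter> blk h a' = {}) \<and>
        (\<Union>a\<in>DH h. blk h a) = PiE (cl h) DL"
  using IN unfolding intra_clustering_def by (rule bspec)
lemma blk_ne: "h \<in> VH \<Longrightarrow> a \<in> DH h \<Longrightarrow> blk h a \<noteq> {}" using IN_h by simp
lemma blk_sub: "h \<in> VH \<Longrightarrow> a \<in> DH h \<Longrightarrow> blk h a \<subseteq> PiE (cl h) DL" using IN_h by simp
lemma blk_disj: "h \<in> VH \<Longrightarrow> a \<in> DH h \<Longrightarrow> a' \<in> DH h \<Longrightarrow> c \<in> blk h a \<Longrightarrow> c \<in> blk h a' \<Longrightarrow> a = a'"
proof (rule ccontr)
  assume "h \<in> VH" "a \<in> DH h" "a' \<in> DH h" "c \<in> blk h a" "c \<in> blk h a'" "a \<noteq> a'"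
  moreover have "blk h a \<inter> blk h a' = {}" using IN_h calculation(1-3,6) by simp
  ultimately show False by blast
qed
lemma blk_cover: "h \<in> VH \<Longrightarrow> c \<in> PiE (cl h) DL \<Longrightarrow> \<exists>a\<in>DH h. c \<in> blk h a"
proof -
  assume "h \<in> VH" "c \<in> PiE (cl h) DL"
  hence "c \<in> (\<Union>a\<in>DH h. blk h a)" using IN_h by simp
  thus ?thesis by blast
qed

lemma tauset_VL: "tauset VH cl VL = VH"
  using cl_sub by (auto simp: tauset_def)

lemma tauset_cunion: "S \<subseteq> VH \<Longrightarrow> tauset VH cl (\<Union>(cl ` S)) = S"
proof -
  assume S: "S \<subseteq> VH"
  have "h \<in> S" if h: "h \<in> VH" "cl h \<subseteq> \<Union>(cl ` S)" for h
  proof -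
    obtain w where w: "w \<in> cl h" using cl_ne[OF h(1)] by blast
    then obtain h' where "h' \<in> S" "w \<in> cl h'" using h(2) by blast
    thus ?thesis using cl_disj[OF h(1) _ w, of h'] S by auto
  qed
  thus ?thesis using S by (auto simp: tauset_def)
qed

lemma cval_eq: "h \<in> VH \<Longrightarrow> a \<in> DH h \<Longrightarrow> restrict c (cl h) \<in> blk h a \<Longrightarrow> cval cl blk DH h c = a"
proof -
  assume h: "h \<in> VH" and a: "a \<in> DH h" and c: "restrict c (cl h) \<in> blk h a"
  show ?thesis unfolding cval_def
  proof (rule the_equality)
    show "a \<in> DH h \<and> restrict c (cl h) \<in> blk h a" using a c by simp
    fix x assume "x \<in> DH h \<and> restrict c (cl h) \<in> blk h x"
    thus "x = a" using blk_disj[OF h _ a _ c, of x] by blast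
  qed
qed

lemma cval_props:
  assumes h: "h \<in> VH" and c: "restrict c (cl h) \<in> PiE (cl h) DL"
  shows "cval cl blk DH h c \<in> DH h \<and> restrict c (cl h) \<in> blk h (cval cl blk DH h c)"
proof -
  obtain a where a: "a \<in> DH h" "restrict c (cl h) \<in> blk h a" using blk_cover[OF h c] by blast
  thus ?thesis using cval_eq[OF h a] by simp
qed

lemma cval_in: "h \<in> VH \<Longrightarrow> c \<in> PiE V DL \<Longrightarrow> cl h \<subseteq> V \<Longrightarrow> cval cl blk DH h c \<in> DH h"
  by (rule cval_props[THEN conjunct1]) (auto simp: PiE_def Pi_def)

lemma tauv_PiE: "v \<in> PiE VL DL \<Longrightarrow> tauv VH cl blk DH VL v \<in> PiE VH DH"
  unfolding tauv_def tauset_VL using cval_in cl_sub by (auto simp: restrict_PiE_iff)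

lemma tauv_PiE': "cunion VH cl X \<Longrightarrow> x \<in> PiE X DL \<Longrightarrow> tauv VH cl blk DH X x \<in> PiE (tauset VH cl X) DH"
  unfolding tauv_def by (auto simp: restrict_PiE_iff tauset_def intro!: cval_in[where V=X])

lemma tauv_restrict:
  "tauv VH cl blk DH Y (restrict s Y) = restrict (tauv VH cl blk DH VL s) (tauset VH cl Y)"
proof (rule ext)
  fix h
  show "tauv VH cl blk DH Y (restrict s Y) h = restrict (tauv VH cl blk DH VL s) (tauset VH cl Y) h"
  proof (cases "h \<in> tauset VH cl Y")
    case True
    hence "h \<in> VH" "cl h \<subseteq> Y" by (auto simp: tauset_def)
    hence "restrict (restrict s Y) (cl h) = restrict s (cl h)" by (intro ext) (auto simp: restrict_def)
    hence "cval cl blk DH h (restrict s Y) = cval cl blk DH h s" by (rule cval_cong)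
    thus ?thesis using True \<open>h \<in> VH\<close> by (simp add: tauv_def tauset_VL)
  qed (simp add: tauv_def)
qed


lemma own_unique: "h \<in> VH \<Longrightarrow> W \<in> cl h \<Longrightarrow> (THE h. h \<in> VH \<and> W \<in> cl h) = h"
  by (rule the_equality) (auto dest: cl_disj)

lemma image_Rst:
  assumes DLne: "\<forall>W\<in>VL. DL W \<noteq> {}" and S: "S \<subseteq> VH" and xL: "xL \<in> PiE (\<Union>(cl ` S)) DL"
  shows "tauv VH cl blk DH VL ` Rst VL DL (\<Union>(cl ` S)) xL = Rst VH DH S (tauv VH cl blk DH (\<Union>(cl ` S)) xL)"
proof -
  define XL where "XL = \<Union>(cl ` S)"
  have tsX: "tauset VH cl XL = S" unfolding XL_def by (rule tauset_cunion[OF S])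
  have txh: "tauv VH cl blk DH XL xL h = cval cl blk DH h xL" if "h \<in> S" for h
    using that tsX by (simp add: tauv_def)
  have tvh: "tauv VH cl blk DH VL v h = cval cl blk DH h v" if "h \<in> VH" for h v
    using that by (simp add: tauv_def tauset_VL)
  have clX: "cl h \<subseteq> XL" if "h \<in> S" for h using that XL_def by auto
  show ?thesis unfolding XL_def[symmetric]
  proof
    show "tauv VH cl blk DH VL ` Rst VL DL XL xL \<subseteq> Rst VH DH S (tauv VH cl blk DH XL xL)"
    proof
      fix z assume "z \<in> tauv VH cl blk DH VL ` Rst VL DL XL xL"
      then obtain v where v: "v \<in> PiE VL DL" "\<forall>W\<in>XL. v W = xL W" and z: "z = tauv VH cl blk DH VL v"
        by (auto simp: Rst_def)
      have "z \<in> PiE VH DH" using tauv_PiE[OF v(1)] z by simp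
      moreover have "z h = tauv VH cl blk DH XL xL h" if h: "h \<in> S" for h
      proof -
        have "restrict v (cl h) = restrict xL (cl h)" using v(2) clX[OF h] by (intro ext) (auto simp: restrict_def)
        hence "cval cl blk DH h v = cval cl blk DH h xL" by (rule cval_cong)
        thus ?thesis using z tvh[of h v] txh[OF h] h S by auto
      qed
      ultimately show "z \<in> Rst VH DH S (tauv VH cl blk DH XL xL)" by (auto simp: Rst_def)
    qed
  next
    show "Rst VH DH S (tauv VH cl blk DH XL xL) \<subseteq> tauv VH cl blk DH VL ` Rst VL DL XL xL"
    proof
      fix z assume "z \<in> Rst VH DH S (tauv VH cl blk DH XL xL)"
      hence z: "z \<in> PiE VH DH" "\<And>h. h \<in> S \<Longrightarrow> z h = tauv VH cl blk DH XL xL h" by (auto simp: Rst_def)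
      define rp where "rp h a = (SOME c. c \<in> blk h a)" for h a
      define own where "own W = (THE h. h \<in> VH \<and> W \<in> cl h)" for W
      have rp: "rp h (z h) \<in> blk h (z h)" if "h \<in> VH" for h
        unfolding rp_def using blk_ne[OF that] z(1) that by (auto simp: some_in_eq PiE_def Pi_def)
      have rpPi: "rp h (z h) \<in> PiE (cl h) DL" if "h \<in> VH" for h
        using rp[OF that] blk_sub[OF that] z(1) that by (auto simp: PiE_def Pi_def)
      have own: "own W = h" if "h \<in> VH" "W \<in> cl h" for h W
        unfolding own_def by (rule own_unique[OF that])
      define v where "v = (\<lambda>W\<in>VL. if W \<in> XL then xL W else if (\<exists>h\<in>VH. W \<in> cl h) then rp (own W) (z (own W)) W else (SOME d. d \<in> DL W))"
      have vPi: "v \<in> PiE VL DL"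
      proof -
        have "v W \<in> DL W" if W: "W \<in> VL" for W
        proof (cases "W \<in> XL")
          case True thus ?thesis using xL W unfolding v_def XL_def by (auto simp: PiE_def Pi_def)
        next
          case False
          show ?thesis
          proof (cases "\<exists>h\<in>VH. W \<in> cl h")
            case True
            then obtain h where h: "h \<in> VH" "W \<in> cl h" by blast
            thus ?thesis using False W own[OF h] rpPi[OF h(1)] unfolding v_def by (auto simp: PiE_def Pi_def)
          next
            case F2: False
            thus ?thesis using False W DLne unfolding v_def by (auto simp: some_in_eq)
          qed
        qed
        thus ?thesis unfolding v_def by (auto simp: PiE_def Pi_def)
      qed
      have XLsub: "XL \<subseteq> VL" using S cl_sub by (auto simp: XL_def)
      have vR: "v \<in> Rst VL DL XL xL"
        using vPi XLsub by (auto simp: Rst_def v_def)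
      have "tauv VH cl blk DH VL v = z"
      proof (rule ext)
        fix h show "tauv VH cl blk DH VL v h = z h"
        proof (cases "h \<in> VH")
          case False thus ?thesis using z(1) by (auto simp: tauv_def tauset_VL PiE_def extensional_def)
        next
          case h: True
          show ?thesis
          proof (cases "h \<in> S")
            case True
            have "restrict v (cl h) = restrict xL (cl h)" using clX[OF True] cl_sub[OF h]
              by (intro ext) (auto simp: restrict_def v_def)
            hence "cval cl blk DH h v = cval cl blk DH h xL" by (rule cval_cong)
            thus ?thesis using tvh[OF h] txh[OF True] z(2)[OF True] by simp
          next
            case False
            have nX: "W \<notin> XL" if "W \<in> cl h" for W
            proof
              assume "W \<in> XL"
              then obtain h' where "h' \<in> S" "W \<in> cl h'" unfolding XL_def by blast
              thus False using cl_disj[OF h, of h' W] that S False by auto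
            qed
            have "restrict v (cl h) = rp h (z h)"
            proof (rule ext)
              fix W show "restrict v (cl h) W = rp h (z h) W"
              proof (cases "W \<in> cl h")
                case True
                thus ?thesis using nX[OF True] own[OF h True] cl_sub[OF h] h by (auto simp: v_def)
              next
                case False
                thus ?thesis using rpPi[OF h] by (auto simp: PiE_def extensional_def)
              qed
            qed
            hence "restrict v (cl h) \<in> blk h (z h)" using rp[OF h] by simp
            moreover have "z h \<in> DH h" using z(1) h by (auto simp: PiE_def Pi_def)
            ultimately have "cval cl blk DH h v = z h" by (intro cval_eq[OF h])
            thus ?thesis using tvh[OF h] by simp
          qed
        qed
      qed
      thus "z \<in> tauv VH cl blk DH VL ` Rst VL DL XL xL" using vR by blast
    qed
  qed
qed

lemma Rst_nonempty:
  assumes DLne: "\<forall>W\<in>V. D W \<noteq> {}" and x: "\<forall>W\<in>X. x W \<in> D W" and XV: "X \<subseteq> V"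
  shows "Rst V D X x \<noteq> {}"
proof -
  define v where "v = (\<lambda>W\<in>V. if W \<in> X then x W else (SOME d. d \<in> D W))"
  have "v \<in> Rst V D X x" using DLne x XV unfolding v_def Rst_def
    by (auto simp: PiE_def Pi_def some_in_eq)
  thus ?thesis by blast
qed

end


lemma Rst_sing:
  assumes eq: "Rst V D X x = Rst V D X' x'" and ne: "Rst V D X x \<noteq> {}"
    and h: "h \<in> X" "h \<notin> X'" "h \<in> V" and a: "a \<in> D h"
  shows "a = x h"
proof -
  obtain r where r: "r \<in> Rst V D X' x'" using ne eq by blast
  have "r(h := a) \<in> Rst V D X' x'" using r h a by (auto simp: Rst_def PiE_def Pi_def extensional_def)
  hence "r(h := a) \<in> Rst V D X x" using eq by simp
  thus ?thesis using h(1) by (auto simp: Rst_def)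
qed

lemma Rst_both:
  assumes eq: "Rst V D X x = Rst V D X' x'" and ne: "Rst V D X x \<noteq> {}"
    and h: "h \<in> X" "h \<in> X'"
  shows "x h = x' h"
proof -
  obtain r where r: "r \<in> Rst V D X x" using ne by blast
  hence "r \<in> Rst V D X' x'" using eq by simp
  thus ?thesis using r h by (auto simp: Rst_def)
qed

lemma Rst_eq_solve:
  assumes M: "is_scm V D M" and u: "u \<in> space (scm_P M)"
    and x: "x \<in> PiE X D" and x': "x' \<in> PiE X' D"
    and eq: "Rst V D X x = Rst V D X' x'" and ne: "Rst V D X x \<noteq> {}"
  shows "solve V D M X x u = solve V D M X' x' u"
proof -
  have ne': "Rst V D X' x' \<noteq> {}" using ne eq by simp
  have pt: "(v W = (if W \<in> X then x W else scm_f M W u v)) \<longleftrightarrow> (v W = (if W \<in> X' then x' W else scm_f M W u v))"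
    if v: "v \<in> PiE V D" and W: "W \<in> V" for v W
  proof -
    have vW: "v W \<in> D W" and fW: "scm_f M W u v \<in> D W" using v W is_scmD(7)[OF M W u v] by (auto simp: PiE_def Pi_def)
    consider "W \<in> X" "W \<in> X'" | "W \<in> X" "W \<notin> X'" | "W \<notin> X" "W \<in> X'" | "W \<notin> X" "W \<notin> X'" by blast
    thus ?thesis
    proof cases
      case 1 thus ?thesis using Rst_both[OF eq ne] by simp
    next
      case 2
      have "v W = x W" using Rst_sing[OF eq ne 2 W vW] .
      moreover have "scm_f M W u v = x W" using Rst_sing[OF eq ne 2 W fW] .
      ultimately show ?thesis using 2 by simp
    next
      case 3
      have "v W = x' W" using Rst_sing[OF eq[symmetric] ne' 3(2,1) W vW] .
      moreover have "scm_f M W u v = x' W" using Rst_sing[OF eq[symmetric] ne' 3(2,1) W fW] .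
      ultimately show ?thesis using 3 by simp
    qed simp
  qed
  have "(\<lambda>v. v \<in> PiE V D \<and> (\<forall>W\<in>V. v W = (if W \<in> X then x W else scm_f M W u v))) =
        (\<lambda>v. v \<in> PiE V D \<and> (\<forall>W\<in>V. v W = (if W \<in> X' then x' W else scm_f M W u v)))"
    using pt by (intro ext) blast
  thus ?thesis unfolding solve_def by simp
qed


lemma set_map2_all:
  "length xs = length ys \<Longrightarrow> (\<forall>t\<in>set (map2 f xs ys). P t) \<longleftrightarrow> (\<forall>i<length xs. P (f (xs!i) (ys!i)))"
  by (auto simp: set_zip)

lemma cf_map2:
  assumes "length ys = length ts"
  shows "cf_prob V D M (map2 F ts ys) = measure (scm_P M) {u \<in> space (scm_P M). \<forall>i<length ts.
     (case F (ts!i) (ys!i) of (Y, X, x, y) \<Rightarrow> restrict (solve V D M X x u) Y = y)}"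
proof -
  have "(\<forall>(Y, X, x, y) \<in> set (map2 F ts ys). restrict (solve V D M X x u) Y = y) \<longleftrightarrow>
    (\<forall>i<length ts. (case F (ts!i) (ys!i) of (Y, X, x, y) \<Rightarrow> restrict (solve V D M X x u) Y = y))" for u
    using set_map2_all[of ts ys F "\<lambda>t. case t of (Y, X, x, y) \<Rightarrow> restrict (solve V D M X x u) Y = y"] assms
    by simp
  thus ?thesis unfolding cf_prob_def by simp
qed

lemma valid_map2:
  assumes "length ys = length ts"
  shows "valid_cf V D (map2 F ts ys) \<longleftrightarrow> (\<forall>i<length ts.
     (case F (ts!i) (ys!i) of (Y, X, x, y) \<Rightarrow> Y \<subseteq> V \<and> X \<subseteq> V \<and> x \<in> PiE X D \<and> y \<in> PiE Y D))"
  unfolding valid_cf_def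
  using set_map2_all[of ts ys F "\<lambda>t. case t of (Y, X, x, y) \<Rightarrow> Y \<subseteq> V \<and> X \<subseteq> V \<and> x \<in> PiE X D \<and> y \<in> PiE Y D"] assms
  by simp

lemma solve_resp: "resp V D M (\<lambda>u. solve V D M X x u)"
  unfolding resp_def by (intro ballI impI solve_Fv)


context
  fixes VL :: "'vl set" and DL :: "'vl \<Rightarrow> 'al set" and VH :: "'vh set" and DH :: "'vh \<Rightarrow> 'ah set"
    and cl :: "'vh \<Rightarrow> 'vl set" and blk :: "'vh \<Rightarrow> 'ah \<Rightarrow> ('vl \<Rightarrow> 'al) set"
  assumes IC: "inter_clustering VL VH cl" and IN: "intra_clustering VL DL VH DH cl blk"
begin

lemma cunion_sub: "cunion VH cl Y \<Longrightarrow> Y \<subseteq> VL"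
  using cl_sub[OF IC IN] unfolding cunion_def by blast

lemma ts_nth:
  assumes "\<forall>(Y, X, x)\<in>set ts. cunion VH cl Y \<and> cunion VH cl X \<and> x \<in> PiE X DL" "i < length ts"
  shows "cunion VH cl (fst (ts!i)) \<and> cunion VH cl (fst (snd (ts!i))) \<and> snd (snd (ts!i)) \<in> PiE (fst (snd (ts!i))) DL"
proof -
  have m: "ts!i \<in> set ts" using assms(2) by simp
  obtain Y X x where e: "ts!i = (Y, X, x)" by (cases "ts!i") auto
  have "cunion VH cl Y \<and> cunion VH cl X \<and> x \<in> PiE X DL" using bspec[OF assms(1) m] e by simp
  thus ?thesis using e by simp
qed

lemma lhs_sum:
  assumes M: "is_scm VL DL M" and ts: "\<forall>(Y, X, x)\<in>set ts. cunion VH cl Y \<and> cunion VH cl X \<and> x \<in> PiE X DL"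
    and len: "length yHs = length ts"
  shows "(\<Sum>ys \<in> {ys. length ys = length ts \<and>
                     (\<forall>i<length ts. ys ! i \<in> PiE (fst (ts ! i)) DL \<and>
                        tauv VH cl blk DH (fst (ts ! i)) (ys ! i) = yHs ! i)}.
           cf_prob VL DL M (map2 (\<lambda>(Y, X, x) y. (Y, X, x, y)) ts ys))
    = measure (scm_P M) {u \<in> space (scm_P M). \<forall>i<length ts.
        restrict (tauv VH cl blk DH VL (solve VL DL M (fst (snd (ts!i))) (snd (snd (ts!i))) u)) (tauset VH cl (fst (ts!i))) = yHs!i}"
proof -
  interpret prob_space "scm_P M" by (rule is_scmD(6)[OF M])
  define n where "n = length ts"
  define Yi where "Yi i = fst (ts!i)" for i
  define Xi where "Xi i = fst (snd (ts!i))" for i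
  define xi where "xi i = snd (snd (ts!i))" for i
  define sol where "sol i u = solve VL DL M (Xi i) (xi i) u" for i u
  have tsi: "cunion VH cl (Yi i) \<and> cunion VH cl (Xi i) \<and> xi i \<in> PiE (Xi i) DL" if "i < n" for i
    using ts_nth[OF ts, of i] that unfolding Yi_def Xi_def xi_def n_def by simp
  have Ysub: "Yi i \<subseteq> VL" if "i < n" for i using tsi[OF that] cunion_sub by blast
  have solPi: "sol i u \<in> PiE VL DL" if "i < n" "u \<in> space (scm_P M)" for i u
    unfolding sol_def using solve_props[OF M that(2), of "Xi i" "xi i"] tsi[OF that(1)]
    by (auto simp: PiE_def Pi_def)
  define YS where "YS = {ys. length ys = n \<and> (\<forall>i<n. ys ! i \<in> PiE (Yi i) DL \<and>
                        tauv VH cl blk DH (Yi i) (ys ! i) = yHs ! i)}"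
  define A where "A ys = {u \<in> space (scm_P M). \<forall>i<n. restrict (sol i u) (Yi i) = ys!i}" for ys
  have trm: "cf_prob VL DL M (map2 (\<lambda>(Y, X, x) y. (Y, X, x, y)) ts ys) = measure (scm_P M) (A ys)"
    if "ys \<in> YS" for ys
  proof -
    have "length ys = length ts" using that by (simp add: YS_def n_def)
    thus ?thesis unfolding cf_map2[OF \<open>length ys = length ts\<close>] A_def
      by (simp add: split_beta sol_def Yi_def Xi_def xi_def n_def)
  qed
  have finYS: "finite YS"
  proof -
    define B where "B = (\<Union>i<n. PiE (Yi i) DL)"
    have fB: "finite B" unfolding B_def
    proof (intro finite_UN_I finite_lessThan finite_PiE)
      fix i assume "i \<in> {..<n}"
      hence "Yi i \<subseteq> VL" using Ysub by simp
      thus "finite (Yi i)" using is_scmD(1)[OF M] finite_subset by blast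
      show "\<And>W. W \<in> Yi i \<Longrightarrow> finite (DL W)" using is_scmD(2)[OF M] \<open>Yi i \<subseteq> VL\<close> by blast
    qed
    have "YS \<subseteq> {xs. set xs \<subseteq> B \<and> length xs = n}"
      unfolding YS_def B_def by (auto simp: in_set_conv_nth) blast
    thus ?thesis using finite_lists_length_eq[OF fB] finite_subset by blast
  qed
  have Asets: "A ys \<in> sets (scm_P M)" for ys
    unfolding A_def
  proof (rule resp_pred_sets[OF M])
    fix u1 u2 assume "Fv VL DL M u1 = Fv VL DL M u2" "\<forall>i<n. restrict (sol i u1) (Yi i) = ys!i"
    thus "\<forall>i<n. restrict (sol i u2) (Yi i) = ys!i" unfolding sol_def using solve_Fv by metis
  qed
  have disj: "disjoint_family_on A YS"
  proof (unfold disjoint_family_on_def, intro ballI impI)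
    fix ys ys' assume "ys \<in> YS" "ys' \<in> YS" "ys \<noteq> ys'"
    show "A ys \<inter> A ys' = {}"
    proof (rule ccontr)
      assume "A ys \<inter> A ys' \<noteq> {}"
      then obtain u where "u \<in> A ys" "u \<in> A ys'" by blast
      hence "\<forall>i<n. ys!i = ys'!i" by (auto simp: A_def)
      moreover have "length ys = n" "length ys' = n" using \<open>ys \<in> YS\<close> \<open>ys' \<in> YS\<close> by (auto simp: YS_def)
      ultimately have "ys = ys'" by (simp add: nth_equalityI)
      thus False using \<open>ys \<noteq> ys'\<close> by simp
    qed
  qed
  have Ueq: "(\<Union>ys\<in>YS. A ys) = {u \<in> space (scm_P M). \<forall>i<n.
        restrict (tauv VH cl blk DH VL (sol i u)) (tauset VH cl (Yi i)) = yHs!i}"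
  proof
    show "(\<Union>ys\<in>YS. A ys) \<subseteq> {u \<in> space (scm_P M). \<forall>i<n.
        restrict (tauv VH cl blk DH VL (sol i u)) (tauset VH cl (Yi i)) = yHs!i}"
    proof
      fix u assume "u \<in> (\<Union>ys\<in>YS. A ys)"
      then obtain ys where ys: "ys \<in> YS" "u \<in> A ys" by blast
      have "restrict (tauv VH cl blk DH VL (sol i u)) (tauset VH cl (Yi i)) = yHs!i" if i: "i < n" for i
      proof -
        have "restrict (tauv VH cl blk DH VL (sol i u)) (tauset VH cl (Yi i)) = tauv VH cl blk DH (Yi i) (restrict (sol i u) (Yi i))"
          by (rule tauv_restrict[OF IC IN, symmetric])
        also have "\<dots> = tauv VH cl blk DH (Yi i) (ys!i)" using ys(2) i by (simp add: A_def)
        also have "\<dots> = yHs!i" using ys(1) i by (simp add: YS_def)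
        finally show ?thesis .
      qed
      thus "u \<in> {u \<in> space (scm_P M). \<forall>i<n.
        restrict (tauv VH cl blk DH VL (sol i u)) (tauset VH cl (Yi i)) = yHs!i}" using ys(2) by (simp add: A_def)
    qed
  next
    show "{u \<in> space (scm_P M). \<forall>i<n.
        restrict (tauv VH cl blk DH VL (sol i u)) (tauset VH cl (Yi i)) = yHs!i} \<subseteq> (\<Union>ys\<in>YS. A ys)"
    proof
      fix u assume u: "u \<in> {u \<in> space (scm_P M). \<forall>i<n.
        restrict (tauv VH cl blk DH VL (sol i u)) (tauset VH cl (Yi i)) = yHs!i}"
      define ys where "ys = map (\<lambda>i. restrict (sol i u) (Yi i)) [0..<n]"
      have "ys \<in> YS" unfolding YS_def
      proof (intro CollectI conjI allI impI)
        show "length ys = n" by (simp add: ys_def)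
        fix i assume i: "i < n"
        show "ys!i \<in> PiE (Yi i) DL" using solPi[OF i] u Ysub[OF i] i by (auto simp: ys_def PiE_def Pi_def)
        have "tauv VH cl blk DH (Yi i) (ys!i) = restrict (tauv VH cl blk DH VL (sol i u)) (tauset VH cl (Yi i))"
          using i by (simp add: ys_def tauv_restrict[OF IC IN])
        thus "tauv VH cl blk DH (Yi i) (ys!i) = yHs!i" using u i by simp
      qed
      moreover have "u \<in> A ys" using u by (simp add: A_def ys_def)
      ultimately show "u \<in> (\<Union>ys\<in>YS. A ys)" by blast
    qed
  qed
  have "(\<Sum>ys\<in>YS. cf_prob VL DL M (map2 (\<lambda>(Y, X, x) y. (Y, X, x, y)) ts ys)) = (\<Sum>ys\<in>YS. measure (scm_P M) (A ys))"
    using trm by (rule sum.cong[OF refl])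
  also have "\<dots> = measure (scm_P M) (\<Union>ys\<in>YS. A ys)"
    by (rule Measure_Space.measure_finite_Union[symmetric, OF finYS _ disj])
       (use Asets emeasure_finite in \<open>auto simp: top_unique\<close>)
  also have "\<dots> = measure (scm_P M) {u \<in> space (scm_P M). \<forall>i<n.
        restrict (tauv VH cl blk DH VL (sol i u)) (tauset VH cl (Yi i)) = yHs!i}" by (simp only: Ueq)
  finally show ?thesis unfolding YS_def n_def Yi_def sol_def Xi_def xi_def .
qed


lemma omega_tauset:
  assumes DLne: "\<forall>W\<in>VL. DL W \<noteq> {}" and X: "cunion VH cl X" and x: "x \<in> PiE X DL"
  shows "omega_rel VL DL VH DH cl blk X x (tauset VH cl X) (tauv VH cl blk DH X x)"
proof -
  obtain S where S: "S \<subseteq> VH" "X = \<Union>(cl ` S)" using X unfolding cunion_def by blast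
  have ts: "tauset VH cl X = S" using tauset_cunion[OF IC IN S(1)] S(2) by simp
  show ?thesis unfolding omega_rel_def
  proof (intro conjI)
    show "tauset VH cl X \<subseteq> VH" by (auto simp: tauset_def)
    show "tauv VH cl blk DH X x \<in> PiE (tauset VH cl X) DH" by (rule tauv_PiE'[OF IC IN X x])
    show "tauv VH cl blk DH VL ` Rst VL DL X x = Rst VH DH (tauset VH cl X) (tauv VH cl blk DH X x)"
      using image_Rst[OF IC IN DLne S(1)] x S(2) ts by simp
  qed
qed

lemma dir2:
  assumes SL: "is_scm VL DL Ml" and SH: "is_scm VH DH Mh"
    and SL2: "is_scm VL DL Ml'" and SH2: "is_scm VH DH Mh'"
    and EL: "L3_equal VL DL Ml' Ml" and EH: "L3_equal VH DH Mh' Mh"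
    and CA: "constructive_tau_abstraction VL DL Ml' VH DH Mh' cl blk"
  shows "L3_tau_consistent VL DL Ml VH DH Mh cl blk"
  unfolding L3_tau_consistent_def
proof (intro allI impI)
  fix ts :: "('vl set \<times> 'vl set \<times> ('vl \<Rightarrow> 'al)) list" and yHs :: "('vh \<Rightarrow> 'ah) list"
  assume A: "length yHs = length ts \<and>
        (\<forall>(Y, X, x) \<in> set ts. cunion VH cl Y \<and> cunion VH cl X \<and> x \<in> PiE X DL) \<and>
        (\<forall>i<length ts. yHs ! i \<in> PiE (tauset VH cl (fst (ts ! i))) DH)"
  hence len: "length yHs = length ts"
    and ts: "\<forall>(Y, X, x) \<in> set ts. cunion VH cl Y \<and> cunion VH cl X \<and> x \<in> PiE X DL"
    and yH: "\<forall>i<length ts. yHs ! i \<in> PiE (tauset VH cl (fst (ts ! i))) DH" by blast+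
  have DLne: "\<forall>W\<in>VL. DL W \<noteq> {}" using is_scmD(3)[OF SL2] by blast
  from CA[unfolded constructive_tau_abstraction_def, THEN conjunct2, THEN conjunct1]
  obtain tauU where meas: "tauU \<in> measurable (scm_P Ml') (scm_P Mh')"
    and deq: "scm_P Mh' = distr (scm_P Ml') (scm_P Mh') tauU"
    and comm0: "\<forall>u\<in>space (scm_P Ml'). \<forall>XL xL XH xH.
           cunion VH cl XL \<and> xL \<in> PiE XL DL \<and> omega_rel VL DL VH DH cl blk XL xL XH xH \<longrightarrow>
           tauv VH cl blk DH VL (solve VL DL Ml' XL xL u) = solve VH DH Mh' XH xH (tauU u)"
    by (elim exE conjE) (rule that)
  have comm: "tauv VH cl blk DH VL (solve VL DL Ml' XL xL u) = solve VH DH Mh' XH xH (tauU u)"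
    if "u \<in> space (scm_P Ml')" "cunion VH cl XL" "xL \<in> PiE XL DL" "omega_rel VL DL VH DH cl blk XL xL XH xH"
    for u XL xL XH xH
    using comm0 that by blast
  define n where "n = length ts"
  define Yi where "Yi i = fst (ts!i)" for i
  define Xi where "Xi i = fst (snd (ts!i))" for i
  define xi where "xi i = snd (snd (ts!i))" for i
  have tsi: "cunion VH cl (Yi i) \<and> cunion VH cl (Xi i) \<and> xi i \<in> PiE (Xi i) DL" if "i < n" for i
    using ts_nth[OF ts, of i] that unfolding Yi_def Xi_def xi_def n_def by simp
  define YS where "YS = {ys. length ys = length ts \<and>
                     (\<forall>i<length ts. ys ! i \<in> PiE (fst (ts ! i)) DL \<and>
                        tauv VH cl blk DH (fst (ts ! i)) (ys ! i) = yHs ! i)}"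
  define E where "E w = (\<forall>i<n. restrict (solve VH DH Mh' (tauset VH cl (Xi i)) (tauv VH cl blk DH (Xi i) (xi i)) w) (tauset VH cl (Yi i)) = yHs!i)" for w
  have "(\<Sum>ys\<in>YS. cf_prob VL DL Ml (map2 (\<lambda>(Y, X, x) y. (Y, X, x, y)) ts ys))
      = (\<Sum>ys\<in>YS. cf_prob VL DL Ml' (map2 (\<lambda>(Y, X, x) y. (Y, X, x, y)) ts ys))"
  proof (rule sum.cong[OF refl])
    fix ys assume ys: "ys \<in> YS"
    hence ly: "length ys = length ts" by (simp add: YS_def)
    have "valid_cf VL DL (map2 (\<lambda>(Y, X, x) y. (Y, X, x, y)) ts ys)"
      unfolding valid_map2[OF ly]
    proof (intro allI impI)
      fix i assume i: "i < length ts"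
      have "cunion VH cl (Yi i) \<and> cunion VH cl (Xi i) \<and> xi i \<in> PiE (Xi i) DL" using tsi i n_def by simp
      moreover have "ys!i \<in> PiE (Yi i) DL" using ys i by (simp add: YS_def Yi_def)
      ultimately show "case (\<lambda>(Y, X, x) y. (Y, X, x, y)) (ts ! i) (ys ! i) of
         (Y, X, x, y) \<Rightarrow> Y \<subseteq> VL \<and> X \<subseteq> VL \<and> x \<in> PiE X DL \<and> y \<in> PiE Y DL"
        using cunion_sub by (auto simp: split_beta Yi_def Xi_def xi_def)
    qed
    thus "cf_prob VL DL Ml (map2 (\<lambda>(Y, X, x) y. (Y, X, x, y)) ts ys) = cf_prob VL DL Ml' (map2 (\<lambda>(Y, X, x) y. (Y, X, x, y)) ts ys)"
      using EL unfolding L3_equal_def by simp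
  qed
  also have "\<dots> = measure (scm_P Ml') {u \<in> space (scm_P Ml'). \<forall>i<length ts.
        restrict (tauv VH cl blk DH VL (solve VL DL Ml' (fst (snd (ts!i))) (snd (snd (ts!i))) u)) (tauset VH cl (fst (ts!i))) = yHs!i}"
    unfolding YS_def by (rule lhs_sum[OF SL2 ts len])
  also have "\<dots> = measure (scm_P Ml') {u \<in> space (scm_P Ml'). E (tauU u)}"
  proof -
    have "tauv VH cl blk DH VL (solve VL DL Ml' (Xi i) (xi i) u) = solve VH DH Mh' (tauset VH cl (Xi i)) (tauv VH cl blk DH (Xi i) (xi i)) (tauU u)"
      if "u \<in> space (scm_P Ml')" "i < n" for u i
      using tsi[OF that(2)] by (intro comm[OF that(1)] omega_tauset[OF DLne]) auto
    hence "{u \<in> space (scm_P Ml'). \<forall>i<length ts.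
        restrict (tauv VH cl blk DH VL (solve VL DL Ml' (fst (snd (ts!i))) (snd (snd (ts!i))) u)) (tauset VH cl (fst (ts!i))) = yHs!i}
      = {u \<in> space (scm_P Ml'). E (tauU u)}"
      unfolding E_def Xi_def xi_def Yi_def n_def by auto
    thus ?thesis by simp
  qed
  also have "\<dots> = measure (scm_P Mh') {w \<in> space (scm_P Mh'). E w}"
  proof -
    have Es: "{w \<in> space (scm_P Mh'). E w} \<in> sets (scm_P Mh')"
    proof (rule resp_pred_sets[OF SH2])
      fix u1 u2 assume "Fv VH DH Mh' u1 = Fv VH DH Mh' u2" "E u1"
      thus "E u2" unfolding E_def by (simp add: solve_Fv[of VH DH Mh' u1 u2])
    qed
    have "measure (distr (scm_P Ml') (scm_P Mh') tauU) {w \<in> space (scm_P Mh'). E w}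
        = measure (scm_P Ml') (tauU -` {w \<in> space (scm_P Mh'). E w} \<inter> space (scm_P Ml'))"
      by (rule measure_distr[OF meas Es])
    moreover have "tauU -` {w \<in> space (scm_P Mh'). E w} \<inter> space (scm_P Ml') = {u \<in> space (scm_P Ml'). E (tauU u)}"
      using measurable_space[OF meas] by auto
    moreover have "measure (scm_P Mh') {w \<in> space (scm_P Mh'). E w} = measure (distr (scm_P Ml') (scm_P Mh') tauU) {w \<in> space (scm_P Mh'). E w}"
      by (simp only: deq[symmetric])
    ultimately show ?thesis by simp
  qed
  also have "\<dots> = cf_prob VH DH Mh' (map2 (\<lambda>(Y, X, x) yH. (tauset VH cl Y, tauset VH cl X, tauv VH cl blk DH X x, yH)) ts yHs)"
    unfolding cf_map2[OF len] E_def n_def Xi_def xi_def Yi_def by (simp add: split_beta)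
  also have "\<dots> = cf_prob VH DH Mh (map2 (\<lambda>(Y, X, x) yH. (tauset VH cl Y, tauset VH cl X, tauv VH cl blk DH X x, yH)) ts yHs)"
  proof -
    have "valid_cf VH DH (map2 (\<lambda>(Y, X, x) yH. (tauset VH cl Y, tauset VH cl X, tauv VH cl blk DH X x, yH)) ts yHs)"
      unfolding valid_map2[OF len]
    proof (intro allI impI)
      fix i assume i: "i < length ts"
      have "cunion VH cl (Xi i)" "xi i \<in> PiE (Xi i) DL" using tsi i n_def by auto
      hence "tauv VH cl blk DH (Xi i) (xi i) \<in> PiE (tauset VH cl (Xi i)) DH" by (rule tauv_PiE'[OF IC IN])
      moreover have "yHs!i \<in> PiE (tauset VH cl (Yi i)) DH" using yH i by (simp add: Yi_def)
      ultimately show "case (\<lambda>(Y, X, x) yH. (tauset VH cl Y, tauset VH cl X, tauv VH cl blk DH X x, yH)) (ts ! i) (yHs ! i) of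
         (Y, X, x, y) \<Rightarrow> Y \<subseteq> VH \<and> X \<subseteq> VH \<and> x \<in> PiE X DH \<and> y \<in> PiE Y DH"
        by (auto simp: split_beta Yi_def Xi_def xi_def tauset_def)
    qed
    thus ?thesis using EH unfolding L3_equal_def by simp
  qed
  finally show "(\<Sum>ys \<in> {ys. length ys = length ts \<and>
                     (\<forall>i<length ts. ys ! i \<in> PiE (fst (ts ! i)) DL \<and>
                        tauv VH cl blk DH (fst (ts ! i)) (ys ! i) = yHs ! i)}.
           cf_prob VL DL Ml (map2 (\<lambda>(Y, X, x) y. (Y, X, x, y)) ts ys))
        = cf_prob VH DH Mh
            (map2 (\<lambda>(Y, X, x) yH. (tauset VH cl Y, tauset VH cl X, tauv VH cl blk DH X x, yH)) ts yHs)"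
    unfolding YS_def .
qed

end


definition liftx :: "('vh \<Rightarrow> 'vl set) \<Rightarrow> ('vh \<Rightarrow> 'ah \<Rightarrow> ('vl \<Rightarrow> 'al) set) \<Rightarrow> 'vh set \<Rightarrow> ('vh \<Rightarrow> 'ah) \<Rightarrow> ('vl \<Rightarrow> 'al)" where
  "liftx cl blk X x = (\<lambda>W\<in>\<Union>(cl ` X). (SOME c. c \<in> blk (THE h. h \<in> X \<and> W \<in> cl h) (x (THE h. h \<in> X \<and> W \<in> cl h))) W)"

lemma pm_measure:
  assumes "finite A" "B \<subseteq> A" "\<And>n. n \<in> A \<Longrightarrow> w n \<ge> 0"
  shows "measure (point_measure A (\<lambda>n. ennreal (w n))) B = (\<Sum>n\<in>B. w n)"
proof -
  have "emeasure (point_measure A (\<lambda>n. ennreal (w n))) B = (\<Sum>n\<in>B. ennreal (w n))"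
    by (rule emeasure_point_measure_finite[OF assms(1,2)])
  also have "\<dots> = ennreal (\<Sum>n\<in>B. w n)" using assms(2,3) by (intro sum_ennreal) auto
  finally show ?thesis unfolding measure_def using assms(2,3) by (simp add: sum_nonneg subset_eq)
qed

context
  fixes VL :: "'vl set" and DL :: "'vl \<Rightarrow> 'al set" and VH :: "'vh set" and DH :: "'vh \<Rightarrow> 'ah set"
    and cl :: "'vh \<Rightarrow> 'vl set" and blk :: "'vh \<Rightarrow> 'ah \<Rightarrow> ('vl \<Rightarrow> 'al) set"
  assumes IC: "inter_clustering VL VH cl" and IN: "intra_clustering VL DL VH DH cl blk"
begin

lemma liftx_props:
  assumes X: "X \<subseteq> VH" and x: "x \<in> PiE X DH"
  shows "liftx cl blk X x \<in> PiE (\<Union>(cl ` X)) DL \<and> tauv VH cl blk DH (\<Union>(cl ` X)) (liftx cl blk X x) = x"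
proof -
  define rp where "rp h = (SOME c. c \<in> blk h (x h))" for h
  have hX: "h \<in> VH" if "h \<in> X" for h using X that by auto
  have xh: "x h \<in> DH h" if "h \<in> X" for h using x that by (auto simp: PiE_def Pi_def)
  have rp: "rp h \<in> blk h (x h)" if "h \<in> X" for h
    unfolding rp_def using blk_ne[OF IC IN hX[OF that] xh[OF that]] by (simp add: some_in_eq)
  have rpPi: "rp h \<in> PiE (cl h) DL" if "h \<in> X" for h
    using rp[OF that] blk_sub[OF IC IN hX[OF that] xh[OF that]] by blast
  have own: "(THE h. h \<in> X \<and> W \<in> cl h) = h" if "h \<in> X" "W \<in> cl h" for h W
    using that by (intro the_equality) (auto dest: cl_disj[OF IC IN] hX)
  have res: "restrict (liftx cl blk X x) (cl h) = rp h" if h: "h \<in> X" for h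
  proof (rule ext)
    fix W show "restrict (liftx cl blk X x) (cl h) W = rp h W"
    proof (cases "W \<in> cl h")
      case True thus ?thesis using own[OF h True] h by (auto simp: liftx_def rp_def)
    next
      case False thus ?thesis using rpPi[OF h] by (auto simp: PiE_def extensional_def)
    qed
  qed
  have Pi: "liftx cl blk X x \<in> PiE (\<Union>(cl ` X)) DL"
  proof -
    have "liftx cl blk X x W \<in> DL W" if W: "W \<in> \<Union>(cl ` X)" for W
    proof -
      obtain h where h: "h \<in> X" "W \<in> cl h" using W by blast
      have "liftx cl blk X x W = restrict (liftx cl blk X x) (cl h) W" using h(2) by simp
      also have "\<dots> = rp h W" using res[OF h(1)] by simp
      finally show ?thesis using rpPi[OF h(1)] h(2) by (auto simp: PiE_def Pi_def)
    qed
    thus ?thesis by (auto simp: liftx_def PiE_def Pi_def)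
  qed
  have ts: "tauset VH cl (\<Union>(cl ` X)) = X" by (rule tauset_cunion[OF IC IN X])
  have "tauv VH cl blk DH (\<Union>(cl ` X)) (liftx cl blk X x) = x"
  proof (rule ext)
    fix h show "tauv VH cl blk DH (\<Union>(cl ` X)) (liftx cl blk X x) h = x h"
    proof (cases "h \<in> X")
      case True
      have "cval cl blk DH h (liftx cl blk X x) = x h"
        using cval_eq[OF IC IN hX[OF True] xh[OF True]] res[OF True] rp[OF True] by simp
      thus ?thesis using True ts by (simp add: tauv_def)
    next
      case False thus ?thesis using x ts by (auto simp: tauv_def PiE_def extensional_def)
    qed
  qed
  thus ?thesis using Pi by simp
qed

lemma image_all:
  assumes DLne: "\<forall>W\<in>VL. DL W \<noteq> {}"
  shows "tauv VH cl blk DH VL ` PiE VL DL = PiE VH DH"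
proof -
  have "tauv VH cl blk DH VL ` Rst VL DL (\<Union>(cl ` {})) (\<lambda>_. undefined) = Rst VH DH {} (tauv VH cl blk DH (\<Union>(cl ` {})) (\<lambda>_. undefined))"
    by (rule image_Rst[OF IC IN DLne]) auto
  thus ?thesis by (simp add: Rst_def)
qed

end


definition CIset :: "('vl \<Rightarrow> 'al set) \<Rightarrow> 'vh set \<Rightarrow> ('vh \<Rightarrow> 'vl set) \<Rightarrow> ('vl set \<times> ('vl \<Rightarrow> 'al)) set" where
  "CIset DL VH cl = {(X, x). cunion VH cl X \<and> x \<in> PiE X DL}"

definition PsiL where
  "PsiL VL DL M VH DH cl blk u = (\<lambda>p\<in>CIset DL VH cl. tauv VH cl blk DH VL (solve VL DL M (fst p) (snd p) u))"

definition PsiH where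
  "PsiH DL VH DH M cl blk u = (\<lambda>p\<in>CIset DL VH cl. solve VH DH M (tauset VH cl (fst p)) (tauv VH cl blk DH (fst p) (snd p)) u)"

lemma restrict_eq_iff: "g \<in> extensional A \<Longrightarrow> (restrict f A = g) \<longleftrightarrow> (\<forall>x\<in>A. f x = g x)"
proof
  assume "restrict f A = g"
  thus "\<forall>x\<in>A. f x = g x" by (metis restrict_apply')
next
  assume g: "g \<in> extensional A" and h: "\<forall>x\<in>A. f x = g x"
  show "restrict f A = g"
  proof (rule ext)
    fix x show "restrict f A x = g x"
      using g h by (cases "x \<in> A") (auto simp: extensional_def)
  qed
qed

lemma PsiL_resp: "resp VL DL M (PsiL VL DL M VH DH cl blk)"
  unfolding resp_def PsiL_def
proof (intro ballI impI)
  fix u1 u2 assume e: "Fv VL DL M u1 = Fv VL DL M u2"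
  show "(\<lambda>p\<in>CIset DL VH cl. tauv VH cl blk DH VL (solve VL DL M (fst p) (snd p) u1)) =
        (\<lambda>p\<in>CIset DL VH cl. tauv VH cl blk DH VL (solve VL DL M (fst p) (snd p) u2))"
    by (rule restrict_ext) (simp only: solve_Fv[OF e])
qed

lemma PsiH_resp: "resp VH DH M (PsiH DL VH DH M cl blk)"
  unfolding resp_def PsiH_def
proof (intro ballI impI)
  fix u1 u2 assume e: "Fv VH DH M u1 = Fv VH DH M u2"
  show "(\<lambda>p\<in>CIset DL VH cl. solve VH DH M (tauset VH cl (fst p)) (tauv VH cl blk DH (fst p) (snd p)) u1) =
        (\<lambda>p\<in>CIset DL VH cl. solve VH DH M (tauset VH cl (fst p)) (tauv VH cl blk DH (fst p) (snd p)) u2)"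
    by (rule restrict_ext) (simp only: solve_Fv[OF e])
qed

context
  fixes VL :: "'vl set" and DL :: "'vl \<Rightarrow> 'al set" and VH :: "'vh set" and DH :: "'vh \<Rightarrow> 'ah set"
    and cl :: "'vh \<Rightarrow> 'vl set" and blk :: "'vh \<Rightarrow> 'ah \<Rightarrow> ('vl \<Rightarrow> 'al) set"
  assumes IC: "inter_clustering VL VH cl" and IN: "intra_clustering VL DL VH DH cl blk"
begin

lemma CI_finite:
  assumes SL: "is_scm VL DL Ml"
  shows "finite (CIset DL VH cl)"
proof -
  have "CIset DL VH cl \<subseteq> Sigma (Pow VL) (\<lambda>X. PiE X DL)"
    using cunion_sub[OF IC IN] by (auto simp: CIset_def)
  moreover have "finite (Sigma (Pow VL) (\<lambda>X. PiE X DL))"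
  proof (intro finite_SigmaI finite_Pow_iff[THEN iffD2] is_scmD(1)[OF SL])
    fix X assume "X \<in> Pow VL"
    thus "finite (PiE X DL)" using is_scmD(1,2)[OF SL]
      by (intro finite_PiE) (auto intro: finite_subset)
  qed
  ultimately show ?thesis by (rule finite_subset)
qed

lemma PsiL_vals:
  assumes SL: "is_scm VL DL Ml" and u: "u \<in> space (scm_P Ml)" and p: "p \<in> CIset DL VH cl"
  shows "PsiL VL DL Ml VH DH cl blk u p \<in> PiE VH DH"
proof -
  have "snd p \<in> PiE (fst p) DL" using p by (auto simp: CIset_def)
  hence "solve VL DL Ml (fst p) (snd p) u \<in> PiE VL DL" by (rule solve_PiE[OF SL u])
  thus ?thesis using p tauv_PiE[OF IC IN] by (simp add: PsiL_def)
qed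

lemma PsiH_vals:
  assumes SH: "is_scm VH DH Mh" and u: "u \<in> space (scm_P Mh)" and p: "p \<in> CIset DL VH cl"
  shows "PsiH DL VH DH Mh cl blk u p \<in> PiE VH DH"
proof -
  have "cunion VH cl (fst p)" "snd p \<in> PiE (fst p) DL" using p by (auto simp: CIset_def)
  hence "tauv VH cl blk DH (fst p) (snd p) \<in> PiE (tauset VH cl (fst p)) DH" by (rule tauv_PiE'[OF IC IN])
  hence "solve VH DH Mh (tauset VH cl (fst p)) (tauv VH cl blk DH (fst p) (snd p)) u \<in> PiE VH DH"
    by (rule solve_PiE[OF SH u])
  thus ?thesis using p by (simp add: PsiH_def)
qed

lemma FE:
  assumes SL: "is_scm VL DL Ml" and SH: "is_scm VH DH Mh"
    and CONS: "L3_tau_consistent VL DL Ml VH DH Mh cl blk"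
  shows "measure (scm_P Ml) {u \<in> space (scm_P Ml). PsiL VL DL Ml VH DH cl blk u = \<psi>}
       = measure (scm_P Mh) {u \<in> space (scm_P Mh). PsiH DL VH DH Mh cl blk u = \<psi>}"
proof (cases "\<psi> \<in> extensional (CIset DL VH cl) \<and> (\<forall>p\<in>CIset DL VH cl. \<psi> p \<in> PiE VH DH)")
  case False
  have "PsiL VL DL Ml VH DH cl blk u \<noteq> \<psi>" if u: "u \<in> space (scm_P Ml)" for u
  proof
    assume e: "PsiL VL DL Ml VH DH cl blk u = \<psi>"
    have "PsiL VL DL Ml VH DH cl blk u \<in> extensional (CIset DL VH cl)" unfolding PsiL_def by simp
    thus False using False PsiL_vals[OF SL u] e by blast
  qed
  hence e1: "{u \<in> space (scm_P Ml). PsiL VL DL Ml VH DH cl blk u = \<psi>} = {}" by blast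
  moreover have "PsiH DL VH DH Mh cl blk u \<noteq> \<psi>" if u: "u \<in> space (scm_P Mh)" for u
  proof
    assume e: "PsiH DL VH DH Mh cl blk u = \<psi>"
    have "PsiH DL VH DH Mh cl blk u \<in> extensional (CIset DL VH cl)" unfolding PsiH_def by simp
    thus False using False PsiH_vals[OF SH u] e by blast
  qed
  hence e2: "{u \<in> space (scm_P Mh). PsiH DL VH DH Mh cl blk u = \<psi>} = {}" by blast
  show ?thesis by (subst e1, subst e2) simp
next
  case True
  hence ext: "\<psi> \<in> extensional (CIset DL VH cl)" and vals: "\<forall>p\<in>CIset DL VH cl. \<psi> p \<in> PiE VH DH" by auto
  obtain cil where cil: "set cil = CIset DL VH cl" using finite_list[OF CI_finite[OF SL]] by blast
  define VC where "VC = \<Union>(cl ` VH)"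
  have tsVC: "tauset VH cl VC = VH" unfolding VC_def by (rule tauset_cunion[OF IC IN]) simp
  have cuVC: "cunion VH cl VC" unfolding VC_def cunion_def by blast
  define ts where "ts = map (\<lambda>p. (VC, fst p, snd p)) cil"
  define yHs where "yHs = map \<psi> cil"
  have len: "length yHs = length ts" by (simp add: ts_def yHs_def)
  have cilCI: "cil!i \<in> CIset DL VH cl" if "i < length cil" for i using cil that nth_mem by blast
  have tsc: "\<forall>(Y, X, x) \<in> set ts. cunion VH cl Y \<and> cunion VH cl X \<and> x \<in> PiE X DL"
    using cil cuVC by (auto simp: ts_def CIset_def)
  have yHc: "\<forall>i<length ts. yHs ! i \<in> PiE (tauset VH cl (fst (ts ! i))) DH"
    using vals cilCI tsVC by (simp add: ts_def yHs_def)
  have eq: "(\<Sum>ys \<in> {ys. length ys = length ts \<and>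
                     (\<forall>i<length ts. ys ! i \<in> PiE (fst (ts ! i)) DL \<and>
                        tauv VH cl blk DH (fst (ts ! i)) (ys ! i) = yHs ! i)}.
           cf_prob VL DL Ml (map2 (\<lambda>(Y, X, x) y. (Y, X, x, y)) ts ys))
        = cf_prob VH DH Mh
            (map2 (\<lambda>(Y, X, x) yH. (tauset VH cl Y, tauset VH cl X, tauv VH cl blk DH X x, yH)) ts yHs)"
    using CONS len tsc yHc unfolding L3_tau_consistent_def by blast
  have L: "(\<Sum>ys \<in> {ys. length ys = length ts \<and>
                     (\<forall>i<length ts. ys ! i \<in> PiE (fst (ts ! i)) DL \<and>
                        tauv VH cl blk DH (fst (ts ! i)) (ys ! i) = yHs ! i)}.
           cf_prob VL DL Ml (map2 (\<lambda>(Y, X, x) y. (Y, X, x, y)) ts ys))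
     = measure (scm_P Ml) {u \<in> space (scm_P Ml). PsiL VL DL Ml VH DH cl blk u = \<psi>}"
  proof -
    have "{u \<in> space (scm_P Ml). \<forall>i<length ts.
        restrict (tauv VH cl blk DH VL (solve VL DL Ml (fst (snd (ts!i))) (snd (snd (ts!i))) u)) (tauset VH cl (fst (ts!i))) = yHs!i}
      = {u \<in> space (scm_P Ml). PsiL VL DL Ml VH DH cl blk u = \<psi>}"
    proof -
      have r: "restrict (tauv VH cl blk DH VL s) VH = tauv VH cl blk DH VL s" for s
        by (simp add: tauv_def tauset_VL[OF IC IN])
      have "(\<forall>i<length ts.
        restrict (tauv VH cl blk DH VL (solve VL DL Ml (fst (snd (ts!i))) (snd (snd (ts!i))) u)) (tauset VH cl (fst (ts!i))) = yHs!i)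
        \<longleftrightarrow> (\<forall>p\<in>set cil. tauv VH cl blk DH VL (solve VL DL Ml (fst p) (snd p) u) = \<psi> p)" for u
        by (simp add: ts_def yHs_def tsVC r all_set_conv_all_nth)
      moreover have "PsiL VL DL Ml VH DH cl blk u = \<psi> \<longleftrightarrow> (\<forall>p\<in>set cil. tauv VH cl blk DH VL (solve VL DL Ml (fst p) (snd p) u) = \<psi> p)" for u
        unfolding PsiL_def restrict_eq_iff[OF ext] cil ..
      ultimately show ?thesis by simp
    qed
    thus ?thesis using lhs_sum[OF IC IN SL tsc len] by simp
  qed
  have R: "cf_prob VH DH Mh
            (map2 (\<lambda>(Y, X, x) yH. (tauset VH cl Y, tauset VH cl X, tauv VH cl blk DH X x, yH)) ts yHs)
     = measure (scm_P Mh) {u \<in> space (scm_P Mh). PsiH DL VH DH Mh cl blk u = \<psi>}"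
  proof -
    have "(\<forall>i<length ts. restrict (solve VH DH Mh (tauset VH cl (fst (cil!i))) (tauv VH cl blk DH (fst (cil!i)) (snd (cil!i))) u) VH = \<psi> (cil!i))
        \<longleftrightarrow> PsiH DL VH DH Mh cl blk u = \<psi>" if u: "u \<in> space (scm_P Mh)" for u
    proof -
      have "restrict (solve VH DH Mh (tauset VH cl (fst (cil!i))) (tauv VH cl blk DH (fst (cil!i)) (snd (cil!i))) u) VH
         = solve VH DH Mh (tauset VH cl (fst (cil!i))) (tauv VH cl blk DH (fst (cil!i)) (snd (cil!i))) u"
        if i: "i < length cil" for i
        using PsiH_vals[OF SH u cilCI[OF i]] cilCI[OF i] by (simp add: PsiH_def PiE_restrict)
      hence "(\<forall>i<length ts. restrict (solve VH DH Mh (tauset VH cl (fst (cil!i))) (tauv VH cl blk DH (fst (cil!i)) (snd (cil!i))) u) VH = \<psi> (cil!i))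
        \<longleftrightarrow> (\<forall>p\<in>set cil. solve VH DH Mh (tauset VH cl (fst p)) (tauv VH cl blk DH (fst p) (snd p)) u = \<psi> p)"
        by (simp add: ts_def all_set_conv_all_nth)
      also have "\<dots> \<longleftrightarrow> PsiH DL VH DH Mh cl blk u = \<psi>"
        unfolding PsiH_def restrict_eq_iff[OF ext] cil ..
      finally show ?thesis .
    qed
    hence "{u \<in> space (scm_P Mh). \<forall>i<length ts. restrict (solve VH DH Mh (tauset VH cl (fst (cil!i))) (tauv VH cl blk DH (fst (cil!i)) (snd (cil!i))) u) VH = \<psi> (cil!i)}
      = {u \<in> space (scm_P Mh). PsiH DL VH DH Mh cl blk u = \<psi>}" by blast
    moreover have "cf_prob VH DH Mh
            (map2 (\<lambda>(Y, X, x) yH. (tauset VH cl Y, tauset VH cl X, tauv VH cl blk DH X x, yH)) ts yHs)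
        = measure (scm_P Mh) {u \<in> space (scm_P Mh). \<forall>i<length ts. restrict (solve VH DH Mh (tauset VH cl (fst (cil!i))) (tauv VH cl blk DH (fst (cil!i)) (snd (cil!i))) u) VH = \<psi> (cil!i)}"
      unfolding cf_map2[OF len] by (simp add: split_beta ts_def yHs_def tsVC)
    ultimately show ?thesis by simp
  qed
  show ?thesis using eq L R by simp
qed

lemma DE:
  assumes SL: "is_scm VL DL Ml" and SH: "is_scm VH DH Mh"
    and CONS: "L3_tau_consistent VL DL Ml VH DH Mh cl blk"
  shows "measure (scm_P Ml) {u \<in> space (scm_P Ml). Q (PsiL VL DL Ml VH DH cl blk u)}
       = measure (scm_P Mh) {u \<in> space (scm_P Mh). Q (PsiH DL VH DH Mh cl blk u)}"
proof -
  define A where "A = PsiL VL DL Ml VH DH cl blk ` space (scm_P Ml) \<union> PsiH DL VH DH Mh cl blk ` space (scm_P Mh)"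
  have fA: "finite A" unfolding A_def
    using resp_finite[OF SL PsiL_resp[of VL DL Ml VH DH cl blk]] resp_finite[OF SH PsiH_resp[of VH DH Mh DL cl blk]] by simp
  have s1: "PsiL VL DL Ml VH DH cl blk ` space (scm_P Ml) \<subseteq> A" by (auto simp: A_def)
  have s2: "PsiH DL VH DH Mh cl blk ` space (scm_P Mh) \<subseteq> A" by (auto simp: A_def)
  show ?thesis
    unfolding fiber_sum[OF SL PsiL_resp[of VL DL Ml VH DH cl blk] fA s1, of Q] fiber_sum[OF SH PsiH_resp[of VH DH Mh DL cl blk] fA s2, of Q]
    by (rule sum.cong[OF refl]) (rule FE[OF SL SH CONS])
qed


lemma dir1:
  assumes SL: "is_scm VL DL Ml" and SH: "is_scm VH DH Mh"
    and CONS: "L3_tau_consistent VL DL Ml VH DH Mh cl blk"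
  shows "\<exists>(Ml' :: ('vl, 'al, nat) scm) (Mh' :: ('vh, 'ah, nat) scm).
               is_scm VL DL Ml' \<and> is_scm VH DH Mh' \<and>
               L3_equal VL DL Ml' Ml \<and> L3_equal VH DH Mh' Mh \<and>
               constructive_tau_abstraction VL DL Ml' VH DH Mh' cl blk"
proof -
  interpret PL: prob_space "scm_P Ml" by (rule is_scmD(6)[OF SL])
  interpret PH: prob_space "scm_P Mh" by (rule is_scmD(6)[OF SH])
  have DLne: "\<forall>W\<in>VL. DL W \<noteq> {}" using is_scmD(3)[OF SL] by blast
  define FSL where "FSL = Fv VL DL Ml ` space (scm_P Ml)"
  define pF where "pF \<phi> = measure (scm_P Ml) {u \<in> space (scm_P Ml). Fv VL DL Ml u = \<phi>}" for \<phi>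
  define \<Phi> where "\<Phi> = {\<phi>\<in>FSL. pF \<phi> \<noteq> 0}"
  have finFSL: "finite FSL" unfolding FSL_def by (rule Fv_finite[OF SL])
  have finPhi: "finite \<Phi>" unfolding \<Phi>_def using finFSL by simp
  define k where "k = card \<Phi>"
  obtain e where e: "bij_betw e {0..<k} \<Phi>" unfolding k_def using ex_bij_betw_nat_finite[OF finPhi] by blast
  define rep where "rep \<phi> = (SOME u. u \<in> space (scm_P Ml) \<and> Fv VL DL Ml u = \<phi>)" for \<phi>
  have rep: "rep \<phi> \<in> space (scm_P Ml) \<and> Fv VL DL Ml (rep \<phi>) = \<phi>" if phi: "\<phi> \<in> FSL" for \<phi>
  proof -
    obtain u where "u \<in> space (scm_P Ml)" "Fv VL DL Ml u = \<phi>" using phi unfolding FSL_def by blast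
    hence "u \<in> space (scm_P Ml) \<and> Fv VL DL Ml u = \<phi>" by simp
    thus ?thesis unfolding rep_def by (rule someI)
  qed
  define uL where "uL n = rep (e n)" for n
  define w where "w n = pF (e n)" for n
  have eP: "e n \<in> \<Phi>" if "n < k" for n using bij_betw_apply[OF e] that by simp
  have uL: "uL n \<in> space (scm_P Ml) \<and> Fv VL DL Ml (uL n) = e n" if "n < k" for n
    unfolding uL_def using rep eP[OF that] by (auto simp: \<Phi>_def)
  have wpos: "w n > 0" if "n < k" for n
    using eP[OF that] measure_nonneg[of "scm_P Ml"] unfolding w_def \<Phi>_def pF_def
    by (simp add: less_le)
  have wnn: "w n \<ge> 0" for n unfolding w_def pF_def by simp
  have RS: "measure (scm_P Ml) {u \<in> space (scm_P Ml). P u} = (\<Sum>n\<in>{0..<k}. if P (uL n) then w n else 0)"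
    if Pr: "\<And>u1 u2. u1 \<in> space (scm_P Ml) \<Longrightarrow> u2 \<in> space (scm_P Ml) \<Longrightarrow> Fv VL DL Ml u1 = Fv VL DL Ml u2 \<Longrightarrow> P u1 = P u2"
    for P
  proof -
    have "{u \<in> space (scm_P Ml). P u} = {u \<in> space (scm_P Ml). (\<lambda>\<phi>. P (rep \<phi>)) (Fv VL DL Ml u)}"
    proof -
      have "P u = P (rep (Fv VL DL Ml u))" if u: "u \<in> space (scm_P Ml)" for u
      proof -
        have "Fv VL DL Ml u \<in> FSL" using u by (simp add: FSL_def)
        thus ?thesis using rep Pr u by blast
      qed
      thus ?thesis by blast
    qed
    also have "measure (scm_P Ml) \<dots> = (\<Sum>\<phi>\<in>{\<phi>\<in>FSL. P (rep \<phi>)}. pF \<phi>)"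
      unfolding pF_def FSL_def
      by (rule fiber_sum[OF SL _ Fv_finite[OF SL] subset_refl]) (simp add: resp_def)
    also have "\<dots> = (\<Sum>\<phi>\<in>FSL. if P (rep \<phi>) then pF \<phi> else 0)"
      by (rule sum.inter_filter[OF finFSL])
    also have "\<dots> = (\<Sum>\<phi>\<in>\<Phi>. if P (rep \<phi>) then pF \<phi> else 0)"
      by (rule sum.mono_neutral_right[OF finFSL]) (auto simp: \<Phi>_def)
    also have "\<dots> = (\<Sum>n\<in>{0..<k}. if P (uL n) then w n else 0)"
      unfolding uL_def w_def by (rule sum.reindex_bij_betw[OF e, symmetric])
    finally show ?thesis .
  qed
  have wsum: "(\<Sum>n\<in>{0..<k}. w n) = 1"
  proof -
    have "measure (scm_P Ml) {u \<in> space (scm_P Ml). True} = (\<Sum>n\<in>{0..<k}. if True then w n else 0)"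
      by (rule RS) simp
    thus ?thesis using PL.prob_space by simp
  qed
  define \<mu> where "\<mu> = point_measure {0..<k} (\<lambda>n. ennreal (w n))"
  have spmu: "space \<mu> = {0..<k}" unfolding \<mu>_def by (simp add: space_point_measure)
  have mumeas: "measure \<mu> {n \<in> space \<mu>. P n} = (\<Sum>n\<in>{0..<k}. if P n then w n else 0)" for P
  proof -
    have "measure \<mu> {n \<in> {0..<k}. P n} = (\<Sum>n\<in>{n\<in>{0..<k}. P n}. w n)"
      unfolding \<mu>_def by (rule pm_measure) (auto simp: wnn)
    hence "measure \<mu> {n \<in> space \<mu>. P n} = (\<Sum>n\<in>{n\<in>{0..<k}. P n}. w n)" by (simp only: spmu)
    also have "\<dots> = (\<Sum>n\<in>{0..<k}. if P n then w n else 0)" by (rule sum.inter_filter) simp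
    finally show ?thesis .
  qed
  have mups: "prob_space \<mu>"
  proof -
    have "(\<Sum>n\<in>{0..<k}. ennreal (w n)) = ennreal (\<Sum>n\<in>{0..<k}. w n)" by (rule sum_ennreal) (simp add: wnn)
    thus ?thesis unfolding \<mu>_def using wsum by (intro prob_space_point_measure) auto
  qed
  let ?PL = "PsiL VL DL Ml VH DH cl blk"
  let ?PH = "PsiH DL VH DH Mh cl blk"
  have exH: "\<exists>uh. uh \<in> space (scm_P Mh) \<and> ?PH uh = ?PL (uL n)" if n: "n < k" for n
  proof (rule ccontr)
    assume "\<not> ?thesis"
    hence e0: "{u \<in> space (scm_P Mh). ?PH u = ?PL (uL n)} = {}" by blast
    have "measure (scm_P Mh) {u \<in> space (scm_P Mh). ?PH u = ?PL (uL n)} = 0" by (subst e0) simp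
    hence "measure (scm_P Ml) {u \<in> space (scm_P Ml). ?PL u = ?PL (uL n)} = 0"
      using FE[OF SL SH CONS, of "?PL (uL n)"] by linarith
    moreover have "measure (scm_P Ml) {u \<in> space (scm_P Ml). Fv VL DL Ml u = e n} \<le> measure (scm_P Ml) {u \<in> space (scm_P Ml). ?PL u = ?PL (uL n)}"
    proof (rule PL.finite_measure_mono)
      show "{u \<in> space (scm_P Ml). ?PL u = ?PL (uL n)} \<in> sets (scm_P Ml)"
        by (rule resp_sets[OF SL PsiL_resp])
      show "{u \<in> space (scm_P Ml). Fv VL DL Ml u = e n} \<subseteq> {u \<in> space (scm_P Ml). ?PL u = ?PL (uL n)}"
      proof
        fix u assume u: "u \<in> {u \<in> space (scm_P Ml). Fv VL DL Ml u = e n}"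
        have r: "\<forall>u1\<in>space (scm_P Ml). \<forall>u2\<in>space (scm_P Ml). Fv VL DL Ml u1 = Fv VL DL Ml u2 \<longrightarrow> ?PL u1 = ?PL u2"
          using PsiL_resp[of VL DL Ml VH DH cl blk] unfolding resp_def .
        have "u \<in> space (scm_P Ml)" "Fv VL DL Ml u = Fv VL DL Ml (uL n)" "uL n \<in> space (scm_P Ml)" using u uL[OF n] by auto
        hence "?PL u = ?PL (uL n)" using r[rule_format, of u "uL n"] by simp
        thus "u \<in> {u \<in> space (scm_P Ml). ?PL u = ?PL (uL n)}" using u by simp
      qed
    qed
    ultimately show False using wpos[OF n] unfolding w_def pF_def by simp
  qed
  define uH where "uH n = (SOME uh. uh \<in> space (scm_P Mh) \<and> ?PH uh = ?PL (uL n))" for n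
  have uH: "uH n \<in> space (scm_P Mh) \<and> ?PH (uH n) = ?PL (uL n)" if "n < k" for n
    unfolding uH_def using exH[OF that] by (rule someI_ex)
  define Ml' :: "('vl, 'al, nat) scm" where "Ml' = \<lparr>scm_pa = scm_pa Ml, scm_f = (\<lambda>W n v. scm_f Ml W (uL n) v), scm_P = \<mu>\<rparr>"
  define Mh' :: "('vh, 'ah, nat) scm" where "Mh' = \<lparr>scm_pa = scm_pa Mh, scm_f = (\<lambda>W n v. scm_f Mh W (uH n) v), scm_P = \<mu>\<rparr>"
  have solL': "solve VL DL Ml' X x n = solve VL DL Ml X x (uL n)" for X x n
    by (simp add: solve_def Ml'_def)
  have solH': "solve VH DH Mh' X x n = solve VH DH Mh X x (uH n)" for X x n
    by (simp add: solve_def Mh'_def)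
  have isL': "is_scm VL DL Ml'"
  proof -
    have ed: "scm_edges VL Ml' = scm_edges VL Ml" by (simp add: scm_edges_def Ml'_def)
    have pa: "scm_pa Ml' = scm_pa Ml" and ff: "scm_f Ml' = (\<lambda>W n v. scm_f Ml W (uL n) v)" and PP: "scm_P Ml' = \<mu>"
      by (simp_all add: Ml'_def)
    show ?thesis unfolding is_scm_def
    proof (intro conjI)
      show "finite VL" by (rule is_scmD(1)[OF SL])
      show "\<forall>W\<in>VL. finite (DL W) \<and> DL W \<noteq> {}" using is_scmD(2,3)[OF SL] by blast
      show "\<forall>W\<in>VL. scm_pa Ml' W \<subseteq> VL - {W}" using is_scmD(4)[OF SL] pa by simp
      show "acyclic (scm_edges VL Ml')" using is_scmD(5)[OF SL] ed by simp
      show "prob_space (scm_P Ml')" using mups PP by simp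
      show "\<forall>W\<in>VL. \<forall>u\<in>space (scm_P Ml'). \<forall>v\<in>PiE VL DL. scm_f Ml' W u v \<in> DL W"
      proof (intro ballI)
        fix W n v assume "W \<in> VL" "n \<in> space (scm_P Ml')" "v \<in> PiE VL DL"
        moreover have "n < k" using \<open>n \<in> space (scm_P Ml')\<close> PP spmu by simp
        ultimately show "scm_f Ml' W n v \<in> DL W" using is_scmD(7)[OF SL] uL ff by simp
      qed
      show "\<forall>W\<in>VL. \<forall>u v v'. (\<forall>Z\<in>scm_pa Ml' W. v Z = v' Z) \<longrightarrow> scm_f Ml' W u v = scm_f Ml' W u v'"
        using is_scmD(8)[OF SL] pa ff by simp
      show "\<forall>W\<in>VL. \<forall>v\<in>PiE VL DL. (\<lambda>u. scm_f Ml' W u v) \<in> measurable (scm_P Ml') (count_space UNIV)"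
        using PP by (simp add: \<mu>_def)
    qed
  qed
  have isH': "is_scm VH DH Mh'"
  proof -
    have ed: "scm_edges VH Mh' = scm_edges VH Mh" by (simp add: scm_edges_def Mh'_def)
    have pa: "scm_pa Mh' = scm_pa Mh" and ff: "scm_f Mh' = (\<lambda>W n v. scm_f Mh W (uH n) v)" and PP: "scm_P Mh' = \<mu>"
      by (simp_all add: Mh'_def)
    show ?thesis unfolding is_scm_def
    proof (intro conjI)
      show "finite VH" by (rule is_scmD(1)[OF SH])
      show "\<forall>W\<in>VH. finite (DH W) \<and> DH W \<noteq> {}" using is_scmD(2,3)[OF SH] by blast
      show "\<forall>W\<in>VH. scm_pa Mh' W \<subseteq> VH - {W}" using is_scmD(4)[OF SH] pa by simp
      show "acyclic (scm_edges VH Mh')" using is_scmD(5)[OF SH] ed by simp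
      show "prob_space (scm_P Mh')" using mups PP by simp
      show "\<forall>W\<in>VH. \<forall>u\<in>space (scm_P Mh'). \<forall>v\<in>PiE VH DH. scm_f Mh' W u v \<in> DH W"
      proof (intro ballI)
        fix W n v assume "W \<in> VH" "n \<in> space (scm_P Mh')" "v \<in> PiE VH DH"
        moreover have "n < k" using \<open>n \<in> space (scm_P Mh')\<close> PP spmu by simp
        ultimately show "scm_f Mh' W n v \<in> DH W" using is_scmD(7)[OF SH] uH ff by simp
      qed
      show "\<forall>W\<in>VH. \<forall>u v v'. (\<forall>Z\<in>scm_pa Mh' W. v Z = v' Z) \<longrightarrow> scm_f Mh' W u v = scm_f Mh' W u v'"
        using is_scmD(8)[OF SH] pa ff by simp
      show "\<forall>W\<in>VH. \<forall>v\<in>PiE VH DH. (\<lambda>u. scm_f Mh' W u v) \<in> measurable (scm_P Mh') (count_space UNIV)"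
        using PP by (simp add: \<mu>_def)
    qed
  qed
  have PPL: "scm_P Ml' = \<mu>" by (simp add: Ml'_def)
  have PPH: "scm_P Mh' = \<mu>" by (simp add: Mh'_def)
  have spL': "space (scm_P Ml') = {0..<k}" using spmu by (simp add: Ml'_def)
  have spH': "space (scm_P Mh') = {0..<k}" using spmu by (simp add: Mh'_def)
  have EqL: "L3_equal VL DL Ml' Ml"
    unfolding L3_equal_def
  proof (intro allI impI)
    fix ts :: "('vl set \<times> 'vl set \<times> ('vl \<Rightarrow> 'al) \<times> ('vl \<Rightarrow> 'al)) list"
    define P where "P u = (\<forall>(Y, X, x, y) \<in> set ts. restrict (solve VL DL Ml X x u) Y = y)" for u
    have "cf_prob VL DL Ml' ts = measure \<mu> {n \<in> space \<mu>. P (uL n)}"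
      unfolding cf_prob_def P_def by (simp only: solL' PPL)
    also have "\<dots> = (\<Sum>n\<in>{0..<k}. if P (uL n) then w n else 0)" by (rule mumeas)
    also have "\<dots> = measure (scm_P Ml) {u \<in> space (scm_P Ml). P u}"
    proof (rule RS[symmetric])
      fix u1 u2 assume "Fv VL DL Ml u1 = Fv VL DL Ml u2"
      thus "P u1 = P u2" unfolding P_def by (simp add: solve_Fv[of VL DL Ml u1 u2])
    qed
    also have "\<dots> = cf_prob VL DL Ml ts" unfolding cf_prob_def P_def ..
    finally show "cf_prob VL DL Ml' ts = cf_prob VL DL Ml ts" .
  qed
  have EqH: "L3_equal VH DH Mh' Mh"
    unfolding L3_equal_def
  proof (intro allI impI)
    fix ts :: "('vh set \<times> 'vh set \<times> ('vh \<Rightarrow> 'ah) \<times> ('vh \<Rightarrow> 'ah)) list"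
    assume valid: "valid_cf VH DH ts"
    define P where "P u = (\<forall>(Y, X, x, y) \<in> set ts. restrict (solve VH DH Mh X x u) Y = y)" for u
    define E where "E \<psi> = (\<forall>(Y, X, x, y) \<in> set ts. restrict (\<psi> (\<Union>(cl ` X), liftx cl blk X x)) Y = y)" for \<psi>
    have PE: "P u = E (?PH u)" for u
    proof -
      have "?PH u (\<Union>(cl ` X), liftx cl blk X x) = solve VH DH Mh X x u"
        if "(Y, X, x, y) \<in> set ts" for Y X x y
      proof -
        have X: "X \<subseteq> VH" and x: "x \<in> PiE X DH" using valid that unfolding valid_cf_def by auto
        have lp: "liftx cl blk X x \<in> PiE (\<Union>(cl ` X)) DL \<and> tauv VH cl blk DH (\<Union>(cl ` X)) (liftx cl blk X x) = x"
          by (rule liftx_props[OF IC IN X x])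
        have cu: "cunion VH cl (\<Union>(cl ` X))" using X unfolding cunion_def by blast
        have "(\<Union>(cl ` X), liftx cl blk X x) \<in> CIset DL VH cl" using cu lp by (simp add: CIset_def)
        thus ?thesis using lp tauset_cunion[OF IC IN X] by (simp add: PsiH_def)
      qed
      thus ?thesis unfolding P_def E_def by fastforce
    qed
    have "cf_prob VH DH Mh' ts = measure \<mu> {n \<in> space \<mu>. P (uH n)}"
      unfolding cf_prob_def P_def by (simp only: solH' PPH)
    also have "\<dots> = (\<Sum>n\<in>{0..<k}. if P (uH n) then w n else 0)" by (rule mumeas)
    also have "\<dots> = (\<Sum>n\<in>{0..<k}. if E (?PL (uL n)) then w n else 0)"
      by (rule sum.cong[OF refl]) (simp add: PE uH)
    also have "\<dots> = measure (scm_P Ml) {u \<in> space (scm_P Ml). E (?PL u)}"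
    proof (rule RS[symmetric])
      fix u1 u2 assume "u1 \<in> space (scm_P Ml)" "u2 \<in> space (scm_P Ml)" "Fv VL DL Ml u1 = Fv VL DL Ml u2"
      hence "?PL u1 = ?PL u2" using PsiL_resp[of VL DL Ml VH DH cl blk] unfolding resp_def by blast
      thus "E (?PL u1) = E (?PL u2)" by simp
    qed
    also have "\<dots> = measure (scm_P Mh) {u \<in> space (scm_P Mh). E (?PH u)}"
      by (rule DE[OF SL SH CONS])
    also have "\<dots> = cf_prob VH DH Mh ts" unfolding cf_prob_def P_def[symmetric] PE ..
    finally show "cf_prob VH DH Mh' ts = cf_prob VH DH Mh ts" .
  qed
  have CA: "constructive_tau_abstraction VL DL Ml' VH DH Mh' cl blk"
    unfolding constructive_tau_abstraction_def
  proof (intro conjI)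
    show "tauv VH cl blk DH VL ` PiE VL DL = PiE VH DH" by (rule image_all[OF IC IN DLne])
    show "\<exists>tauU. tauU \<in> measurable (scm_P Ml') (scm_P Mh') \<and>
        tauU ` space (scm_P Ml') = space (scm_P Mh') \<and>
        scm_P Mh' = distr (scm_P Ml') (scm_P Mh') tauU \<and>
        (\<forall>u\<in>space (scm_P Ml'). \<forall>XL xL XH xH.
           cunion VH cl XL \<and> xL \<in> PiE XL DL \<and> omega_rel VL DL VH DH cl blk XL xL XH xH \<longrightarrow>
           tauv VH cl blk DH VL (solve VL DL Ml' XL xL u) = solve VH DH Mh' XH xH (tauU u))"
    proof (intro exI conjI)
      have PP: "scm_P Ml' = \<mu>" "scm_P Mh' = \<mu>" by (simp_all add: Ml'_def Mh'_def)
      show "(\<lambda>x. x) \<in> measurable (scm_P Ml') (scm_P Mh')" unfolding PP by (rule measurable_id)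
      show "(\<lambda>x. x) ` space (scm_P Ml') = space (scm_P Mh')" unfolding PP by simp
      show "scm_P Mh' = distr (scm_P Ml') (scm_P Mh') (\<lambda>x. x)" unfolding PP by simp
      show "\<forall>u\<in>space (scm_P Ml'). \<forall>XL xL XH xH.
           cunion VH cl XL \<and> xL \<in> PiE XL DL \<and> omega_rel VL DL VH DH cl blk XL xL XH xH \<longrightarrow>
           tauv VH cl blk DH VL (solve VL DL Ml' XL xL u) = solve VH DH Mh' XH xH u"
      proof (intro ballI allI impI, elim conjE)
        fix n XL xL XH xH
        assume n0: "n \<in> space (scm_P Ml')" and XL: "cunion VH cl XL" and xL: "xL \<in> PiE XL DL"
          and om: "omega_rel VL DL VH DH cl blk XL xL XH xH"
        have n: "n < k" using n0 spL' by simp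
        have CI: "(XL, xL) \<in> CIset DL VH cl" using XL xL by (simp add: CIset_def)
        have om2: "omega_rel VL DL VH DH cl blk XL xL (tauset VH cl XL) (tauv VH cl blk DH XL xL)"
          by (rule omega_tauset[OF IC IN DLne XL xL])
        have XLsub: "XL \<subseteq> VL" by (rule cunion_sub[OF IC IN XL])
        have ne: "Rst VL DL XL xL \<noteq> {}"
          using xL by (intro Rst_nonempty[OF IC IN DLne _ XLsub]) (auto simp: PiE_def Pi_def)
        have req: "Rst VH DH (tauset VH cl XL) (tauv VH cl blk DH XL xL) = Rst VH DH XH xH"
          using om om2 unfolding omega_rel_def by simp
        have rne: "Rst VH DH (tauset VH cl XL) (tauv VH cl blk DH XL xL) \<noteq> {}"
          using om2 ne unfolding omega_rel_def by auto
        have xH: "xH \<in> PiE XH DH" using om unfolding omega_rel_def by simp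
        have "tauv VH cl blk DH VL (solve VL DL Ml' XL xL n) = ?PL (uL n) (XL, xL)"
          using CI by (simp add: solL' PsiL_def)
        also have "\<dots> = ?PH (uH n) (XL, xL)" using uH[OF n] by simp
        also have "\<dots> = solve VH DH Mh (tauset VH cl XL) (tauv VH cl blk DH XL xL) (uH n)"
          using CI by (simp add: PsiH_def)
        also have "\<dots> = solve VH DH Mh XH xH (uH n)"
          by (rule Rst_eq_solve[OF SH conjunct1[OF uH[OF n]] tauv_PiE'[OF IC IN XL xL] xH req rne])
        also have "\<dots> = solve VH DH Mh' XH xH n" by (simp add: solH')
        finally show "tauv VH cl blk DH VL (solve VL DL Ml' XL xL n) = solve VH DH Mh' XH xH n" .
      qed
    qed
    show "\<forall>XL xL. cunion VH cl XL \<and> xL \<in> PiE XL DL \<longrightarrow> (\<exists>XH xH. omega_rel VL DL VH DH cl blk XL xL XH xH)"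
      using omega_tauset[OF IC IN DLne] by blast
    show "\<forall>XH xH. XH \<subseteq> VH \<and> xH \<in> PiE XH DH \<longrightarrow>
        (\<exists>XL xL. cunion VH cl XL \<and> xL \<in> PiE XL DL \<and> omega_rel VL DL VH DH cl blk XL xL XH xH)"
    proof (intro allI impI, elim conjE)
      fix XH xH assume XH: "XH \<subseteq> VH" and xH: "xH \<in> PiE XH DH"
      have lp: "liftx cl blk XH xH \<in> PiE (\<Union>(cl ` XH)) DL \<and> tauv VH cl blk DH (\<Union>(cl ` XH)) (liftx cl blk XH xH) = xH"
        by (rule liftx_props[OF IC IN XH xH])
      have cu: "cunion VH cl (\<Union>(cl ` XH))" using XH unfolding cunion_def by blast
      have "omega_rel VL DL VH DH cl blk (\<Union>(cl ` XH)) (liftx cl blk XH xH) (tauset VH cl (\<Union>(cl ` XH))) (tauv VH cl blk DH (\<Union>(cl ` XH)) (liftx cl blk XH xH))"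
        using lp by (intro omega_tauset[OF IC IN DLne cu]) simp
      hence "omega_rel VL DL VH DH cl blk (\<Union>(cl ` XH)) (liftx cl blk XH xH) XH xH"
        using lp tauset_cunion[OF IC IN XH] by simp
      thus "\<exists>XL xL. cunion VH cl XL \<and> xL \<in> PiE XL DL \<and> omega_rel VL DL VH DH cl blk XL xL XH xH"
        using cu lp by blast
    qed
    show "\<exists>(C :: 'vh \<Rightarrow> 'vl set) (g :: 'vh \<Rightarrow> ('vl \<Rightarrow> 'al) \<Rightarrow> 'ah).
        (\<forall>h\<in>VH. C h \<noteq> {} \<and> C h \<subseteq> VL) \<and>
        (\<forall>h\<in>VH. \<forall>h'\<in>VH. h \<noteq> h' \<longrightarrow> C h \<inter> C h' = {}) \<and>
        (\<forall>h\<in>VH. \<forall>c\<in>PiE (C h) DL. g h c \<in> DH h) \<and>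
        (\<forall>vL\<in>PiE VL DL. \<forall>h\<in>VH. tauv VH cl blk DH VL vL h = g h (restrict vL (C h)))"
    proof (intro exI conjI)
      show "\<forall>h\<in>VH. cl h \<noteq> {} \<and> cl h \<subseteq> VL" using cl_ne[OF IC IN] cl_sub[OF IC IN] by blast
      show "\<forall>h\<in>VH. \<forall>h'\<in>VH. h \<noteq> h' \<longrightarrow> cl h \<inter> cl h' = {}" using IC unfolding inter_clustering_def by blast
      show "\<forall>h\<in>VH. \<forall>c\<in>PiE (cl h) DL. cval cl blk DH h c \<in> DH h"
        using cval_in[OF IC IN] by blast
      show "\<forall>vL\<in>PiE VL DL. \<forall>h\<in>VH. tauv VH cl blk DH VL vL h = cval cl blk DH h (restrict vL (cl h))"
      proof (intro ballI)
        fix vL h assume "vL \<in> PiE VL DL" "h \<in> VH"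
        have "cval cl blk DH h vL = cval cl blk DH h (restrict vL (cl h))" by (rule cval_cong) simp
        thus "tauv VH cl blk DH VL vL h = cval cl blk DH h (restrict vL (cl h))"
          using \<open>h \<in> VH\<close> by (simp add: tauv_def tauset_VL[OF IC IN])
      qed
    qed
  qed
  show ?thesis using isL' isH' EqL EqH CA by blast
qed

end


theorem proposition1:
  fixes VL :: "'vl set" and DL :: "'vl \<Rightarrow> 'al set" and Ml :: "('vl, 'al, 'ul) scm"
    and VH :: "'vh set" and DH :: "'vh \<Rightarrow> 'ah set" and Mh :: "('vh, 'ah, 'uh) scm"
    and cl :: "'vh \<Rightarrow> 'vl set" and blk :: "'vh \<Rightarrow> 'ah \<Rightarrow> ('vl \<Rightarrow> 'al) set"
  assumes "is_scm VL DL Ml"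
    and "is_scm VH DH Mh"
    and "inter_clustering VL VH cl"
    and "admissible VL Ml VH cl"
    and "intra_clustering VL DL VH DH cl blk"
  shows "(L3_tau_consistent VL DL Ml VH DH Mh cl blk \<longrightarrow>
            (\<exists>(Ml' :: ('vl, 'al, nat) scm) (Mh' :: ('vh, 'ah, nat) scm).
               is_scm VL DL Ml' \<and> is_scm VH DH Mh' \<and>
               L3_equal VL DL Ml' Ml \<and> L3_equal VH DH Mh' Mh \<and>
               constructive_tau_abstraction VL DL Ml' VH DH Mh' cl blk))
       \<and> (\<forall>(Ml' :: ('vl, 'al, 'ul2) scm) (Mh' :: ('vh, 'ah, 'uh2) scm).
            is_scm VL DL Ml' \<and> is_scm VH DH Mh' \<and>
            L3_equal VL DL Ml' Ml \<and> L3_equal VH DH Mh' Mh \<and>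
            constructive_tau_abstraction VL DL Ml' VH DH Mh' cl blk
            \<longrightarrow> L3_tau_consistent VL DL Ml VH DH Mh cl blk)"
proof (intro conjI allI impI)
  assume "L3_tau_consistent VL DL Ml VH DH Mh cl blk"
  thus "\<exists>(Ml' :: ('vl, 'al, nat) scm) (Mh' :: ('vh, 'ah, nat) scm).
               is_scm VL DL Ml' \<and> is_scm VH DH Mh' \<and>
               L3_equal VL DL Ml' Ml \<and> L3_equal VH DH Mh' Mh \<and>
               constructive_tau_abstraction VL DL Ml' VH DH Mh' cl blk"
    by (rule dir1[OF assms(3,5,1,2)])
next
  fix Ml' :: "('vl, 'al, 'ul2) scm" and Mh' :: "('vh, 'ah, 'uh2) scm"
  assume "is_scm VL DL Ml' \<and> is_scm VH DH Mh' \<and>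
            L3_equal VL DL Ml' Ml \<and> L3_equal VH DH Mh' Mh \<and>
            constructive_tau_abstraction VL DL Ml' VH DH Mh' cl blk"
  thus "L3_tau_consistent VL DL Ml VH DH Mh cl blk"
    using dir2[OF assms(3,5,1,2)] by blast
qed

end
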